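(* The set $\mathbb F_{\widehat{\mathcal Q}}:=\{d\mathrm Q/d\mathrm P\mid\mathrm Q\in\widehat{\mathcal Q}\}$ is closed w.r.t. the $L^1(\Omega,\mathcal F,\mathrm P)$-norm. It is even compact w.r.t. the $L^1$-norm if $\mathcal Q$ is relatively compact w.r.t. the topology of total variation; in this case $\mathbb F_{\widehat{\mathcal Q}^e}:=\{d\mathrm Q/d\mathrm P\mid\mathrm Q\in\widehat{\mathcal Q}^e\}$ is relatively compact w.r.t. the $L^1$-norm.
   Context: $(\Omega,\mathcal F,\mathrm P)$ is a probability space and $\mathcal Q$ is a nonempty set of probability measures on $\mathcal F$, each absolutely continuous w.r.t. $\mathrm P$. $\widehat{\mathcal Q}$ is the set of all probability measures $\mathrm Q$ on $\mathcal F$ with $\mathbb E_{\mathrm Q}[X]\ge\inf_{\mathrm Q'\in\mathcal Q}\mathbb E_{\mathrm Q'}[X]$ for every $\mathrm P$-essentially bounded random variable $X$ (such $\mathrm Q$ are absolutely continuous w.r.t. $\mathrm P$), and $\widehat{\mathcal Q}^e$ is the set of members of $\widehat{\mathcal Q}$ equivalent to $\mathrm P$. The topology of total variation is induced by $d_{tv}(\mathrm Q_1,\mathrm Q_2)=\sup_{A\in\mathcal F}|\mathrm Q_1(A)-\mathrm Q_2(A)|$. *)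

theory Defs
  imports "HOL-Probability.Probability"
begin

definition prob_on :: "'a measure \<Rightarrow> 'a measure \<Rightarrow> bool" where
  "prob_on M Q \<longleftrightarrow> prob_space Q \<and> sets Q = sets M"

definition ess_bounded :: "'a measure \<Rightarrow> ('a \<Rightarrow> real) \<Rightarrow> bool" where
  "ess_bounded M X \<longleftrightarrow> X \<in> borel_measurable M \<and> (\<exists>C. AE x in M. \<bar>X x\<bar> \<le> C)"

definition Qhat :: "'a measure \<Rightarrow> 'a measure set \<Rightarrow> 'a measure set" where
  "Qhat M Qs = {Q. prob_on M Q \<and>
      (\<forall>X. ess_bounded M X \<longrightarrow> integral\<^sup>L Q X \<ge> (INF Q'\<in>Qs. integral\<^sup>L Q' X))}"

definition Qhat_e :: "'a measure \<Rightarrow> 'a measure set \<Rightarrow> 'a measure set" where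
  "Qhat_e M Qs = {Q \<in> Qhat M Qs. absolutely_continuous M Q \<and> absolutely_continuous Q M}"

text \<open>Elements of L^1 are represented by functions; the set is closed under P-a.e. modification
  among nonnegative measurable functions.\<close>
definition dens_set :: "'a measure \<Rightarrow> 'a measure set \<Rightarrow> ('a \<Rightarrow> real) set" where
  "dens_set M Qs = {f. f \<in> borel_measurable M \<and> (\<forall>x\<in>space M. 0 \<le> f x) \<and>
      density M (\<lambda>x. ennreal (f x)) \<in> Qs}"

definition L1_conv :: "'a measure \<Rightarrow> (nat \<Rightarrow> 'a \<Rightarrow> real) \<Rightarrow> ('a \<Rightarrow> real) \<Rightarrow> bool" where
  "L1_conv M f g \<longleftrightarrow> (\<lambda>n. \<integral>x. \<bar>f n x - g x\<bar> \<partial>M) \<longlonglongrightarrow> 0"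

text \<open>Closedness in L^1 (sequential, L^1 being metric): L^1 limits of sequences in F are
  a.e. equal to elements of F.\<close>
definition L1_closed :: "'a measure \<Rightarrow> ('a \<Rightarrow> real) set \<Rightarrow> bool" where
  "L1_closed M F \<longleftrightarrow> (\<forall>f g. (\<forall>n. f n \<in> F) \<and> integrable M g \<and> L1_conv M f g \<longrightarrow>
      (\<exists>h\<in>F. AE x in M. g x = h x))"

text \<open>Compactness in L^1 (sequential compactness; equivalent in metric spaces).\<close>
definition L1_compact :: "'a measure \<Rightarrow> ('a \<Rightarrow> real) set \<Rightarrow> bool" where
  "L1_compact M F \<longleftrightarrow> (\<forall>f. (\<forall>n. f n \<in> F) \<longrightarrow>
      (\<exists>(r::nat \<Rightarrow> nat) h. strict_mono r \<and> h \<in> F \<and> L1_conv M (f \<circ> r) h))"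

definition L1_relcompact :: "'a measure \<Rightarrow> ('a \<Rightarrow> real) set \<Rightarrow> bool" where
  "L1_relcompact M F \<longleftrightarrow> (\<forall>f. (\<forall>n. f n \<in> F) \<longrightarrow>
      (\<exists>(r::nat \<Rightarrow> nat) h. strict_mono r \<and> integrable M h \<and> L1_conv M (f \<circ> r) h))"

definition d_tv :: "'a measure \<Rightarrow> 'a measure \<Rightarrow> 'a measure \<Rightarrow> real" where
  "d_tv M Q1 Q2 = (SUP A\<in>sets M. \<bar>measure Q1 A - measure Q2 A\<bar>)"

text \<open>Relative compactness w.r.t. total variation in the space of probability measures on
  (space M, sets M) (sequential; this space is metric under d_tv).\<close>
definition tv_relcompact :: "'a measure \<Rightarrow> 'a measure set \<Rightarrow> bool" where
  "tv_relcompact M Qs \<longleftrightarrow> (\<forall>Q::nat \<Rightarrow> 'a measure. (\<forall>n. Q n \<in> Qs) \<longrightarrow>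
      (\<exists>(r::nat \<Rightarrow> nat) Q0. strict_mono r \<and> prob_on M Q0 \<and> (\<lambda>n. d_tv M (Q (r n)) Q0) \<longlonglongrightarrow> 0))"

end

theory Submission
  imports Defs "HOL-Library.Diagonal_Subsequence"
begin


lemma int_mult_bdd:
  fixes f X :: "'a \<Rightarrow> real"
  assumes "integrable M f" "X \<in> borel_measurable M" "AE x in M. \<bar>X x\<bar> \<le> C"
  shows "integrable M (\<lambda>x. f x * X x)"
proof (rule Bochner_Integration.integrable_bound[where f="\<lambda>x. \<bar>C\<bar> * f x"])
  show "integrable M (\<lambda>x. \<bar>C\<bar> * f x)" using assms by auto
  show "(\<lambda>x. f x * X x) \<in> borel_measurable M" using borel_measurable_integrable[OF assms(1)] assms(2) by measurable
  show "AE x in M. norm (f x * X x) \<le> norm (\<bar>C\<bar> * f x)"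
    using assms(3) by eventually_elim (simp add: abs_mult mult.commute mult_right_mono)
qed

lemma L1_conv_integral_tendsto:
  fixes f :: "nat \<Rightarrow> 'a \<Rightarrow> real"
  assumes fi: "\<And>n. integrable M (f n)" and hi: "integrable M h" and c: "L1_conv M f h"
    and Xm: "X \<in> borel_measurable M" and Xb: "AE x in M. \<bar>X x\<bar> \<le> C"
  shows "(\<lambda>n. \<integral>x. f n x * X x \<partial>M) \<longlonglongrightarrow> (\<integral>x. h x * X x \<partial>M)"
proof -
  have i1: "\<And>n. integrable M (\<lambda>x. f n x * X x)" using int_mult_bdd[OF fi Xm Xb] .
  have i2: "integrable M (\<lambda>x. h x * X x)" using int_mult_bdd[OF hi Xm Xb] .
  have i3: "\<And>n. integrable M (\<lambda>x. \<bar>f n x - h x\<bar>)" using fi hi by auto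
  have le: "\<bar>(\<integral>x. f n x * X x \<partial>M) - (\<integral>x. h x * X x \<partial>M)\<bar> \<le> \<bar>C\<bar> * (\<integral>x. \<bar>f n x - h x\<bar> \<partial>M)" for n
  proof -
    have "(\<integral>x. (f n x - h x) * X x \<partial>M) = (\<integral>x. f n x * X x - h x * X x \<partial>M)"
      by (simp add: left_diff_distrib)
    also have "\<dots> = (\<integral>x. f n x * X x \<partial>M) - (\<integral>x. h x * X x \<partial>M)" by (rule Bochner_Integration.integral_diff[OF i1 i2])
    finally have "(\<integral>x. f n x * X x \<partial>M) - (\<integral>x. h x * X x \<partial>M) = (\<integral>x. (f n x - h x) * X x \<partial>M)" ..
    also have "\<bar>\<dots>\<bar> \<le> (\<integral>x. \<bar>(f n x - h x) * X x\<bar> \<partial>M)" by (rule integral_abs_bound)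
    also have "\<dots> \<le> (\<integral>x. \<bar>C\<bar> * \<bar>f n x - h x\<bar> \<partial>M)"
    proof (rule integral_mono_AE)
      have "integrable M (\<lambda>x. f n x * X x - h x * X x)" by (rule Bochner_Integration.integrable_diff[OF i1 i2])
      then have "integrable M (\<lambda>x. (f n x - h x) * X x)" by (simp add: left_diff_distrib)
      then show "integrable M (\<lambda>x. \<bar>(f n x - h x) * X x\<bar>)" by (rule integrable_abs)
      show "integrable M (\<lambda>x. \<bar>C\<bar> * \<bar>f n x - h x\<bar>)" using i3 by auto
      show "AE x in M. \<bar>(f n x - h x) * X x\<bar> \<le> \<bar>C\<bar> * \<bar>f n x - h x\<bar>"
        using Xb
      proof eventually_elim
        case (elim x)
        then have "\<bar>X x\<bar> \<le> \<bar>C\<bar>" by simp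
        then have "\<bar>f n x - h x\<bar> * \<bar>X x\<bar> \<le> \<bar>f n x - h x\<bar> * \<bar>C\<bar>" by (rule mult_left_mono) simp
        then show ?case by (simp add: abs_mult mult.commute)
      qed
    qed
    also have "\<dots> = \<bar>C\<bar> * (\<integral>x. \<bar>f n x - h x\<bar> \<partial>M)" by simp
    finally show ?thesis .
  qed
  have t: "(\<lambda>n. \<bar>C\<bar> * (\<integral>x. \<bar>f n x - h x\<bar> \<partial>M)) \<longlonglongrightarrow> 0"
    using c unfolding L1_conv_def by (rule tendsto_mult_right_zero)
  have "(\<lambda>n. (\<integral>x. f n x * X x \<partial>M) - (\<integral>x. h x * X x \<partial>M)) \<longlonglongrightarrow> 0"
    by (rule Lim_null_comparison[OF always_eventually t]) (use le in auto)
  then show ?thesis by (simp add: LIM_zero_iff)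
qed



lemma dens_basic:
  assumes M: "prob_space M" and f: "f \<in> dens_set M Qs'" and Qs': "\<And>Q. Q \<in> Qs' \<Longrightarrow> prob_on M Q"
  shows "integrable M f" "integral\<^sup>L M f = 1" "f \<in> borel_measurable M" "\<And>x. x \<in> space M \<Longrightarrow> 0 \<le> f x"
proof -
  have fm[measurable]: "f \<in> borel_measurable M" and nn: "\<And>x. x \<in> space M \<Longrightarrow> 0 \<le> f x"
    and D: "density M (\<lambda>x. ennreal (f x)) \<in> Qs'" using f by (auto simp: dens_set_def)
  then have "prob_space (density M (\<lambda>x. ennreal (f x)))" using Qs' by (auto simp: prob_on_def)
  then have "emeasure (density M (\<lambda>x. ennreal (f x))) (space M) = 1"
    using prob_space.emeasure_space_1 by fastforce
  then have nn1: "(\<integral>\<^sup>+x. ennreal (f x) \<partial>M) = 1"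
    by (simp add: emeasure_density nn_integral_density)
  show int: "integrable M f"
    by (rule integrableI_nonneg) (use nn nn1 in \<open>auto intro: AE_I2\<close>)
  have "ennreal (integral\<^sup>L M f) = 1" using nn_integral_eq_integral[OF int] nn nn1 by (auto intro: AE_I2)
  then show "integral\<^sup>L M f = 1" by simp
  show "f \<in> borel_measurable M" "\<And>x. x \<in> space M \<Longrightarrow> 0 \<le> f x" using fm nn by auto
qed

lemma integral_density_real:
  assumes "f \<in> borel_measurable M" "\<And>x. x \<in> space M \<Longrightarrow> 0 \<le> f x" "X \<in> borel_measurable M"
  shows "integral\<^sup>L (density M (\<lambda>x. ennreal (f x))) X = (\<integral>x. f x * X x \<partial>M)"
  using integral_density[of X M f] assms by (auto intro: AE_I2)

lemma qhat_ineq: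
  assumes "f \<in> dens_set M (Qhat M Qs)" "ess_bounded M X"
  shows "(INF Q'\<in>Qs. integral\<^sup>L Q' X) \<le> (\<integral>x. f x * X x \<partial>M)"
proof -
  have "f \<in> borel_measurable M" "\<And>x. x \<in> space M \<Longrightarrow> 0 \<le> f x"
    and D: "density M (\<lambda>x. ennreal (f x)) \<in> Qhat M Qs" using assms by (auto simp: dens_set_def)
  moreover have "X \<in> borel_measurable M" using assms by (auto simp: ess_bounded_def)
  ultimately show ?thesis using assms(2) D integral_density_real[of f M X]
    by (auto simp: Qhat_def)
qed

lemma closed_part:
  assumes M: "prob_space M"
  shows "L1_closed M (dens_set M (Qhat M Qs))"
  unfolding L1_closed_def
proof (intro allI impI, elim conjE)
  fix f :: "nat \<Rightarrow> 'a \<Rightarrow> real" and g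
  assume fF: "\<forall>n. f n \<in> dens_set M (Qhat M Qs)" and gi: "integrable M g" and c: "L1_conv M f g"
  have Qp: "\<And>Q. Q \<in> Qhat M Qs \<Longrightarrow> prob_on M Q" by (auto simp: Qhat_def)
  have fb1: "integrable M (f n)" for n using dens_basic(1)[OF M fF[rule_format] Qp] .
  have fb2: "integral\<^sup>L M (f n) = 1" for n using dens_basic(2)[OF M fF[rule_format] Qp] .
  have fb4: "0 \<le> f n x" if "x \<in> space M" for n x using fF that by (auto simp: dens_set_def)
  have fm[measurable]: "f n \<in> borel_measurable M" for n using fb1[of n] by (rule borel_measurable_integrable)
  define h where "h x = max 0 (g x)" for x
  have gm[measurable]: "g \<in> borel_measurable M" using gi by auto
  have hm[measurable]: "h \<in> borel_measurable M" unfolding h_def by measurable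
  have hi: "integrable M h" unfolding h_def using gi by auto
  have neg_le: "(\<integral>x. max 0 (- g x) \<partial>M) \<le> (\<integral>x. \<bar>f n x - g x\<bar> \<partial>M)" for n
  proof (rule integral_mono)
    show "integrable M (\<lambda>x. max 0 (- g x))" using gi by auto
    show "integrable M (\<lambda>x. \<bar>f n x - g x\<bar>)" using gi fb1 by auto
    show "max 0 (- g x) \<le> \<bar>f n x - g x\<bar>" if "x \<in> space M" for x
      using fb4[OF that, of n] by auto
  qed
  have "(\<integral>x. max 0 (- g x) \<partial>M) \<le> 0"
    using c unfolding L1_conv_def by (rule LIMSEQ_le_const) (use neg_le in auto)
  moreover have "0 \<le> (\<integral>x. max 0 (- g x) \<partial>M)" by (intro integral_nonneg_AE) auto
  ultimately have "(\<integral>x. max 0 (- g x) \<partial>M) = 0" by simp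
  then have "AE x in M. max 0 (- g x) = 0"
    using integral_nonneg_eq_0_iff_AE[where f="\<lambda>x. max 0 (- g x)" and M=M] gi by auto
  then have gh: "AE x in M. g x = h x" by eventually_elim (auto simp: h_def)
  have eqi: "(\<integral>x. \<bar>f n x - g x\<bar> \<partial>M) = (\<integral>x. \<bar>f n x - h x\<bar> \<partial>M)" for n
  proof (rule integral_cong_AE)
    show "(\<lambda>x. \<bar>f n x - g x\<bar>) \<in> borel_measurable M" by measurable
    show "(\<lambda>x. \<bar>f n x - h x\<bar>) \<in> borel_measurable M" by measurable
    show "AE x in M. \<bar>f n x - g x\<bar> = \<bar>f n x - h x\<bar>" using gh by (rule eventually_mono) simp
  qed
  have ch: "L1_conv M f h" using c unfolding L1_conv_def eqi .
  have h_nn: "\<And>x. x \<in> space M \<Longrightarrow> 0 \<le> h x" by (auto simp: h_def)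
  have lim1: "(\<lambda>n. \<integral>x. f n x * X x \<partial>M) \<longlonglongrightarrow> (\<integral>x. h x * X x \<partial>M)"
    if "X \<in> borel_measurable M" "AE x in M. \<bar>X x\<bar> \<le> C" for X C
    using L1_conv_integral_tendsto[OF fb1 hi ch that] .
  have "(\<lambda>n. \<integral>x. f n x * 1 \<partial>M) \<longlonglongrightarrow> (\<integral>x. h x * 1 \<partial>M)" by (rule lim1[of _ 1]) auto
  then have "(\<lambda>n. 1) \<longlonglongrightarrow> (\<integral>x. h x \<partial>M)" using fb2 by simp
  then have "1 = (\<integral>x. h x \<partial>M)" by (rule LIMSEQ_unique[OF tendsto_const])
  then have int1: "(\<integral>x. h x \<partial>M) = 1" by simp
  have "emeasure (density M (\<lambda>x. ennreal (h x))) (space (density M (\<lambda>x. ennreal (h x)))) = 1"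
    using nn_integral_eq_integral[OF hi] h_nn int1
    by (simp add: emeasure_density nn_integral_density AE_I2)
  then have ps: "prob_space (density M (\<lambda>x. ennreal (h x)))" by (rule prob_spaceI)
  have "density M (\<lambda>x. ennreal (h x)) \<in> Qhat M Qs"
    unfolding Qhat_def
  proof (intro CollectI conjI allI impI)
    show "prob_on M (density M (\<lambda>x. ennreal (h x)))" using ps by (simp add: prob_on_def)
    fix X assume X: "ess_bounded M X"
    then obtain C where Xm: "X \<in> borel_measurable M" and Xb: "AE x in M. \<bar>X x\<bar> \<le> C"
      by (auto simp: ess_bounded_def)
    have "(INF Q'\<in>Qs. integral\<^sup>L Q' X) \<le> (\<integral>x. h x * X x \<partial>M)"
      by (rule LIMSEQ_le_const[OF lim1[OF Xm Xb]]) (use qhat_ineq[OF fF[rule_format] X] in auto)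
    then show "(INF Q'\<in>Qs. integral\<^sup>L Q' X) \<le> integral\<^sup>L (density M (\<lambda>x. ennreal (h x))) X"
      using integral_density_real[OF hm h_nn Xm] by simp
  qed
  then have "h \<in> dens_set M (Qhat M Qs)" using h_nn by (auto simp: dens_set_def)
  then show "\<exists>h\<in>dens_set M (Qhat M Qs). AE x in M. g x = h x" using gh by blast
qed



definition cell :: "'a measure \<Rightarrow> ('a \<Rightarrow> 'b) \<Rightarrow> 'b \<Rightarrow> 'a set" where
  "cell M \<phi> v = {y \<in> space M. \<phi> y = v}"

definition cavg :: "'a measure \<Rightarrow> ('a \<Rightarrow> 'b) \<Rightarrow> ('a \<Rightarrow> real) \<Rightarrow> 'b \<Rightarrow> real" where
  "cavg M \<phi> u v = (\<integral>y. u y * indicator (cell M \<phi> v) y \<partial>M) / measure M (cell M \<phi> v)"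

definition proj :: "'a measure \<Rightarrow> ('a \<Rightarrow> 'b) \<Rightarrow> ('a \<Rightarrow> real) \<Rightarrow> 'a \<Rightarrow> real" where
  "proj M \<phi> u x = (\<Sum>v\<in>\<phi> ` space M. cavg M \<phi> u v * indicator (cell M \<phi> v) x)"

definition good :: "'a measure \<Rightarrow> ('a \<Rightarrow> 'b) \<Rightarrow> bool" where
  "good M \<phi> \<longleftrightarrow> finite (\<phi> ` space M) \<and> (\<forall>v\<in>\<phi> ` space M. cell M \<phi> v \<in> sets M)"

lemma proj_eq: "x \<in> space M \<Longrightarrow> finite (\<phi> ` space M) \<Longrightarrow> proj M \<phi> u x = cavg M \<phi> u (\<phi> x)"
proof -
  assume x: "x \<in> space M" and fin: "finite (\<phi> ` space M)"
  have "proj M \<phi> u x = (\<Sum>v\<in>\<phi> ` space M. if \<phi> x = v then cavg M \<phi> u v else 0)"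
    unfolding proj_def by (intro sum.cong) (auto simp: cell_def indicator_def x)
  also have "\<dots> = cavg M \<phi> u (\<phi> x)" using fin x by (subst sum.delta') auto
  finally show ?thesis .
qed

lemma proj_out: "x \<notin> space M \<Longrightarrow> proj M \<phi> u x = 0"
  by (auto simp: proj_def cell_def indicator_def)

lemma sum_ind_cell: "x \<in> space M \<Longrightarrow> finite (\<phi> ` space M) \<Longrightarrow>
   (\<Sum>v\<in>\<phi> ` space M. indicator (cell M \<phi> v) x :: real) = 1"
proof -
  assume x: "x \<in> space M" and fin: "finite (\<phi> ` space M)"
  have "(\<Sum>v\<in>\<phi> ` space M. indicator (cell M \<phi> v) x :: real) = (\<Sum>v\<in>\<phi> ` space M. if \<phi> x = v then 1 else 0)"
    by (intro sum.cong) (auto simp: cell_def indicator_def x)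
  also have "\<dots> = 1" using fin x by (subst sum.delta') auto
  finally show ?thesis .
qed

context
  fixes M :: "'a measure" and \<phi> :: "'a \<Rightarrow> 'b"
  assumes M: "prob_space M" and g: "good M \<phi>"
begin

interpretation prob_space M by (rule M)

lemma fin: "finite (\<phi> ` space M)" using g by (simp add: good_def)
lemma cell_sets: "v \<in> \<phi> ` space M \<Longrightarrow> cell M \<phi> v \<in> sets M" using g by (auto simp: good_def)

lemma int_ind: "v \<in> \<phi> ` space M \<Longrightarrow> integrable M (indicator (cell M \<phi> v) :: 'a \<Rightarrow> real)"
  using cell_sets by (intro integrable_real_indicator) (auto simp: less_top[symmetric])

lemma int_u_ind: "integrable M u \<Longrightarrow> v \<in> \<phi> ` space M \<Longrightarrow> integrable M (\<lambda>x. u x * indicator (cell M \<phi> v) x :: real)"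
proof -
  assume "integrable M u" "v \<in> \<phi> ` space M"
  then have "integrable M (\<lambda>x. indicator (cell M \<phi> v) x *\<^sub>R u x)"
    using cell_sets by (intro integrable_mult_indicator) auto
  then show ?thesis by (simp add: mult.commute)
qed

lemma proj_fun: "proj M \<phi> u = (\<lambda>x. \<Sum>v\<in>\<phi> ` space M. cavg M \<phi> u v * indicator (cell M \<phi> v) x)"
  by (simp add: proj_def fun_eq_iff)

lemma proj_meas[measurable]: "proj M \<phi> u \<in> borel_measurable M"
  unfolding proj_fun using cell_sets by (intro borel_measurable_sum) auto

lemma proj_int: "integrable M (proj M \<phi> u)"
  unfolding proj_fun using int_ind by (intro Bochner_Integration.integrable_sum Bochner_Integration.integrable_mult_right) auto

end


context
  fixes M :: "'a measure" and \<phi> :: "'a \<Rightarrow> 'b"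
  assumes M: "prob_space M" and g: "good M \<phi>"
begin

interpretation prob_space M by (rule M)

lemma cell_int_null:
  assumes "v \<in> \<phi> ` space M" "measure M (cell M \<phi> v) = 0"
  shows "(\<integral>x. (u::'a\<Rightarrow>real) x * indicator (cell M \<phi> v) x \<partial>M) = 0"
proof (rule integral_eq_zero_AE)
  have "cell M \<phi> v \<in> null_sets M" using assms cell_sets[OF M g]
    by (simp add: emeasure_eq_measure null_sets_def)
  then show "AE x in M. u x * indicator (cell M \<phi> v) x = 0"
    by (rule AE_not_in[THEN eventually_mono]) simp
qed

lemma cavg_mul: "v \<in> \<phi> ` space M \<Longrightarrow>
  cavg M \<phi> u v * measure M (cell M \<phi> v) = (\<integral>x. u x * indicator (cell M \<phi> v) x \<partial>M)"
  by (cases "measure M (cell M \<phi> v) = 0") (simp_all add: cavg_def cell_int_null)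

lemma int_proj_mult:
  fixes u X w :: "'a \<Rightarrow> real"
  assumes X: "integrable M X"
  shows "(\<integral>x. proj M \<phi> u x * X x \<partial>M) =
    (\<Sum>v\<in>\<phi> ` space M. cavg M \<phi> u v * (\<integral>x. X x * indicator (cell M \<phi> v) x \<partial>M))"
proof -
  have "(\<integral>x. proj M \<phi> u x * X x \<partial>M) =
     (\<integral>x. (\<Sum>v\<in>\<phi> ` space M. cavg M \<phi> u v * (X x * indicator (cell M \<phi> v) x)) \<partial>M)"
    unfolding proj_def sum_distrib_right by (simp add: mult_ac)
  also have "\<dots> = (\<Sum>v\<in>\<phi> ` space M. (\<integral>x. cavg M \<phi> u v * (X x * indicator (cell M \<phi> v) x) \<partial>M))"
    by (rule Bochner_Integration.integral_sum)
       (use int_u_ind[OF M g X] in \<open>auto intro: Bochner_Integration.integrable_mult_right\<close>)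
  also have "\<dots> = (\<Sum>v\<in>\<phi> ` space M. cavg M \<phi> u v * (\<integral>x. X x * indicator (cell M \<phi> v) x \<partial>M))"
    by simp
  finally show ?thesis .
qed

lemma int_proj_sym:
  fixes u X w :: "'a \<Rightarrow> real"
  assumes X: "integrable M X"
  shows "(\<integral>x. proj M \<phi> u x * X x \<partial>M) =
    (\<Sum>v\<in>\<phi> ` space M. (\<integral>x. u x * indicator (cell M \<phi> v) x \<partial>M) * (\<integral>x. X x * indicator (cell M \<phi> v) x \<partial>M)
        / measure M (cell M \<phi> v))"
  unfolding int_proj_mult[OF X] by (intro sum.cong refl) (simp add: cavg_def)

lemma proj_selfadj:
  fixes u X w :: "'a \<Rightarrow> real"
  assumes u: "integrable M u" and X: "integrable M X"
  shows "(\<integral>x. proj M \<phi> u x * X x \<partial>M) = (\<integral>x. u x * proj M \<phi> X x \<partial>M)"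
proof -
  have "(\<integral>x. u x * proj M \<phi> X x \<partial>M) = (\<integral>x. proj M \<phi> X x * u x \<partial>M)"
    by (simp add: mult.commute)
  then show ?thesis unfolding int_proj_sym[OF X] int_proj_sym[OF u] by (simp add: mult.commute)
qed

lemma int_mult_proj: "integrable M (u::'a\<Rightarrow>real) \<Longrightarrow> integrable M (\<lambda>x. u x * proj M \<phi> X x)"
proof -
  assume u: "integrable M u"
  have "integrable M (\<lambda>x. \<Sum>v\<in>\<phi> ` space M. cavg M \<phi> X v * (u x * indicator (cell M \<phi> v) x))"
    by (intro Bochner_Integration.integrable_sum Bochner_Integration.integrable_mult_right int_u_ind[OF M g u])
  then show ?thesis
    unfolding proj_def by (simp add: sum_distrib_left mult.assoc mult.commute mult.left_commute)
qed
lemma sum_cell_abs_le: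
  fixes u X w :: "'a \<Rightarrow> real"
  assumes u: "integrable M u"
  shows "(\<Sum>v\<in>\<phi> ` space M. \<bar>\<integral>x. u x * indicator (cell M \<phi> v) x \<partial>M\<bar>) \<le> (\<integral>x. \<bar>u x\<bar> \<partial>M)"
proof -
  have "(\<Sum>v\<in>\<phi> ` space M. \<bar>\<integral>x. u x * indicator (cell M \<phi> v) x \<partial>M\<bar>)
     \<le> (\<Sum>v\<in>\<phi> ` space M. (\<integral>x. \<bar>u x\<bar> * indicator (cell M \<phi> v) x \<partial>M))"
  proof (rule ordered_comm_monoid_add_class.sum_mono)
    fix v assume "v \<in> \<phi> ` space M"
    have "\<bar>\<integral>x. u x * indicator (cell M \<phi> v) x \<partial>M\<bar> \<le> (\<integral>x. \<bar>u x * indicator (cell M \<phi> v) x\<bar> \<partial>M)"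
      by (rule integral_abs_bound)
    also have "\<dots> = (\<integral>x. \<bar>u x\<bar> * indicator (cell M \<phi> v) x \<partial>M)"
      by (simp add: abs_mult)
    finally show "\<bar>\<integral>x. u x * indicator (cell M \<phi> v) x \<partial>M\<bar> \<le> (\<integral>x. \<bar>u x\<bar> * indicator (cell M \<phi> v) x \<partial>M)" .
  qed
  also have "\<dots> = (\<integral>x. (\<Sum>v\<in>\<phi> ` space M. \<bar>u x\<bar> * indicator (cell M \<phi> v) x) \<partial>M)"
    by (rule Bochner_Integration.integral_sum[symmetric]) (intro int_u_ind[OF M g] integrable_abs u)
  also have "\<dots> = (\<integral>x. \<bar>u x\<bar> \<partial>M)"
  proof (rule Bochner_Integration.integral_cong[OF refl])
    fix x assume "x \<in> space M"
    then show "(\<Sum>v\<in>\<phi> ` space M. \<bar>u x\<bar> * indicator (cell M \<phi> v) x) = \<bar>u x\<bar>"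
      using sum_ind_cell[of x M \<phi>] fin[OF M g] by (simp add: sum_distrib_left[symmetric])
  qed
  finally show ?thesis .
qed

lemma proj_L1_le:
  fixes u X w :: "'a \<Rightarrow> real"
  assumes u: "integrable M u"
  shows "(\<integral>x. \<bar>proj M \<phi> u x\<bar> \<partial>M) \<le> (\<Sum>v\<in>\<phi> ` space M. \<bar>\<integral>x. u x * indicator (cell M \<phi> v) x \<partial>M\<bar>)"
proof -
  have "(\<integral>x. \<bar>proj M \<phi> u x\<bar> \<partial>M) \<le> (\<integral>x. (\<Sum>v\<in>\<phi> ` space M. \<bar>cavg M \<phi> u v\<bar> * indicator (cell M \<phi> v) x) \<partial>M)"
  proof (rule integral_mono)
    show "integrable M (\<lambda>x. \<bar>proj M \<phi> u x\<bar>)" using proj_int[OF M g] by (rule integrable_abs)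
    show "integrable M (\<lambda>x. \<Sum>v\<in>\<phi> ` space M. \<bar>cavg M \<phi> u v\<bar> * indicator (cell M \<phi> v) x)"
      by (intro Bochner_Integration.integrable_sum Bochner_Integration.integrable_mult_right int_ind[OF M g])
    fix x
    have "\<bar>proj M \<phi> u x\<bar> \<le> (\<Sum>v\<in>\<phi> ` space M. \<bar>cavg M \<phi> u v * indicator (cell M \<phi> v) x\<bar>)"
      unfolding proj_def by (rule sum_abs)
    also have "\<dots> = (\<Sum>v\<in>\<phi> ` space M. \<bar>cavg M \<phi> u v\<bar> * indicator (cell M \<phi> v) x)"
      by (simp add: abs_mult)
    finally show "\<bar>proj M \<phi> u x\<bar> \<le> (\<Sum>v\<in>\<phi> ` space M. \<bar>cavg M \<phi> u v\<bar> * indicator (cell M \<phi> v) x)" .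
  qed
  also have "\<dots> = (\<Sum>v\<in>\<phi> ` space M. (\<integral>x. \<bar>cavg M \<phi> u v\<bar> * indicator (cell M \<phi> v) x \<partial>M))"
    by (rule Bochner_Integration.integral_sum)
       (intro Bochner_Integration.integrable_mult_right int_ind[OF M g])
  also have "\<dots> = (\<Sum>v\<in>\<phi> ` space M. \<bar>\<integral>x. u x * indicator (cell M \<phi> v) x \<partial>M\<bar>)"
  proof (rule sum.cong[OF refl])
    fix v assume v: "v \<in> \<phi> ` space M"
    have cs: "cell M \<phi> v \<in> sets M" using cell_sets[OF M g v] .
    have "(\<integral>x. \<bar>cavg M \<phi> u v\<bar> * indicator (cell M \<phi> v) x \<partial>M) = \<bar>cavg M \<phi> u v\<bar> * measure M (cell M \<phi> v)"
      using cs by (simp add: Int_absorb2 sets.sets_into_space)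
    also have "\<dots> = \<bar>cavg M \<phi> u v * measure M (cell M \<phi> v)\<bar>" by (simp add: abs_mult)
    also have "\<dots> = \<bar>\<integral>x. u x * indicator (cell M \<phi> v) x \<partial>M\<bar>" by (simp add: cavg_mul[OF v])
    finally show "(\<integral>x. \<bar>cavg M \<phi> u v\<bar> * indicator (cell M \<phi> v) x \<partial>M) = \<bar>\<integral>x. u x * indicator (cell M \<phi> v) x \<partial>M\<bar>" .
  qed
  finally show ?thesis .
qed

lemma proj_diff:
  fixes u X w :: "'a \<Rightarrow> real"
  assumes u: "integrable M u" and w: "integrable M w"
  shows "proj M \<phi> (\<lambda>x. u x - w x) x = proj M \<phi> u x - proj M \<phi> w x"
proof -
  have "cavg M \<phi> (\<lambda>x. u x - w x) v = cavg M \<phi> u v - cavg M \<phi> w v" if v: "v \<in> \<phi> ` space M" for v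
  proof -
    have "(\<integral>x. (u x - w x) * indicator (cell M \<phi> v) x \<partial>M) =
          (\<integral>x. u x * indicator (cell M \<phi> v) x - w x * indicator (cell M \<phi> v) x \<partial>M)"
      by (simp add: left_diff_distrib)
    also have "\<dots> = (\<integral>x. u x * indicator (cell M \<phi> v) x \<partial>M) - (\<integral>x. w x * indicator (cell M \<phi> v) x \<partial>M)"
      by (rule Bochner_Integration.integral_diff[OF int_u_ind[OF M g u v] int_u_ind[OF M g w v]])
    finally show ?thesis unfolding cavg_def by (simp add: diff_divide_distrib)
  qed
  then show ?thesis unfolding proj_def
    by (simp add: sum_subtractf[symmetric] left_diff_distrib)
qed

end


context
  fixes M :: "'a measure" and \<phi> :: "'a \<Rightarrow> 'b"
  assumes M: "prob_space M" and g: "good M \<phi>"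
begin

interpretation prob_space M by (rule M)

lemma proj_bdd:
  fixes X :: "'a \<Rightarrow> real"
  assumes X: "integrable M X" and Xb: "AE x in M. \<bar>X x\<bar> \<le> C"
  shows "\<bar>proj M \<phi> X x\<bar> \<le> \<bar>C\<bar>"
proof (cases "x \<in> space M")
  case False then show ?thesis by (simp add: proj_out)
next
  case True
  define v where "v = \<phi> x"
  have v: "v \<in> \<phi> ` space M" using True by (simp add: v_def)
  have cs: "cell M \<phi> v \<in> sets M" using cell_sets[OF M g v] .
  have pe: "proj M \<phi> X x = cavg M \<phi> X v" using proj_eq[OF True fin[OF M g]] by (simp add: v_def)
  show ?thesis
  proof (cases "measure M (cell M \<phi> v) = 0")
    case True then show ?thesis by (simp add: pe cavg_def)
  next
    case False
    then have mpos: "0 < measure M (cell M \<phi> v)" by (simp add: zero_less_measure_iff)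
    have "\<bar>\<integral>y. X y * indicator (cell M \<phi> v) y \<partial>M\<bar> \<le> (\<integral>y. \<bar>X y * indicator (cell M \<phi> v) y\<bar> \<partial>M)"
      by (rule integral_abs_bound)
    also have "\<dots> \<le> (\<integral>y. \<bar>C\<bar> * indicator (cell M \<phi> v) y \<partial>M)"
    proof (rule integral_mono_AE)
      show "integrable M (\<lambda>y. \<bar>X y * indicator (cell M \<phi> v) y\<bar>)"
        by (intro integrable_abs int_u_ind[OF M g X v])
      show "integrable M (\<lambda>y. \<bar>C\<bar> * indicator (cell M \<phi> v) y)"
        by (intro Bochner_Integration.integrable_mult_right int_ind[OF M g v])
      show "AE y in M. \<bar>X y * indicator (cell M \<phi> v) y\<bar> \<le> \<bar>C\<bar> * indicator (cell M \<phi> v) y"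
        using Xb by (rule eventually_mono) (auto simp: indicator_def)
    qed
    also have "\<dots> = \<bar>C\<bar> * measure M (cell M \<phi> v)"
      using cs by (simp add: Int_absorb2 sets.sets_into_space)
    finally have "\<bar>\<integral>y. X y * indicator (cell M \<phi> v) y \<partial>M\<bar> \<le> \<bar>C\<bar> * measure M (cell M \<phi> v)" .
    then show ?thesis using mpos by (simp add: pe cavg_def divide_le_eq)
  qed
qed

lemma AE_cell_pos: "AE x in M. measure M (cell M \<phi> (\<phi> x)) \<noteq> 0"
proof -
  have "AE x in M. \<forall>v\<in>\<phi> ` space M. x \<in> cell M \<phi> v \<longrightarrow> measure M (cell M \<phi> v) \<noteq> 0"
  proof (subst eventually_ball_finite_distrib[OF fin[OF M g]], intro ballI)
    fix v assume v: "v \<in> \<phi> ` space M"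
    show "AE x in M. x \<in> cell M \<phi> v \<longrightarrow> measure M (cell M \<phi> v) \<noteq> 0"
    proof (cases "measure M (cell M \<phi> v) = 0")
      case True
      then have "cell M \<phi> v \<in> null_sets M" using cell_sets[OF M g v]
        by (simp add: emeasure_eq_measure null_sets_def)
      then show ?thesis by (rule AE_not_in[THEN eventually_mono]) simp
    qed simp
  qed
  then show ?thesis
  proof (rule AE_mp[OF _ AE_I2[OF impI]])
    fix x assume "x \<in> space M" "\<forall>v\<in>\<phi> ` space M. x \<in> cell M \<phi> v \<longrightarrow> measure M (cell M \<phi> v) \<noteq> 0"
    then show "measure M (cell M \<phi> (\<phi> x)) \<noteq> 0" by (auto simp: cell_def)
  qed
qed

lemma proj_exact:
  fixes s :: "'a \<Rightarrow> real"
  assumes s: "integrable M s" and const: "\<And>x y. x \<in> space M \<Longrightarrow> y \<in> space M \<Longrightarrow> \<phi> y = \<phi> x \<Longrightarrow> s y = s x"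
  shows "AE x in M. proj M \<phi> s x = s x"
  using AE_cell_pos
proof (rule AE_mp[OF _ AE_I2[OF impI]])
  fix x assume x: "x \<in> space M" and m: "measure M (cell M \<phi> (\<phi> x)) \<noteq> 0"
  have v: "\<phi> x \<in> \<phi> ` space M" using x by simp
  have cs: "cell M \<phi> (\<phi> x) \<in> sets M" using cell_sets[OF M g v] .
  have "(\<integral>y. s y * indicator (cell M \<phi> (\<phi> x)) y \<partial>M) = (\<integral>y. s x * indicator (cell M \<phi> (\<phi> x)) y \<partial>M)"
  proof (rule Bochner_Integration.integral_cong[OF refl])
    fix y assume y: "y \<in> space M"
    show "s y * indicator (cell M \<phi> (\<phi> x)) y = s x * indicator (cell M \<phi> (\<phi> x)) y"
      using const[OF x y] by (auto simp: indicator_def cell_def)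
  qed
  also have "\<dots> = s x * measure M (cell M \<phi> (\<phi> x))"
    using cs by (simp add: Int_absorb2 sets.sets_into_space)
  finally show "proj M \<phi> s x = s x"
    using m by (simp add: proj_eq[OF x fin[OF M g]] cavg_def)
qed

lemma proj_contr:
  fixes u :: "'a \<Rightarrow> real"
  assumes u: "integrable M u"
  shows "(\<integral>x. \<bar>proj M \<phi> u x\<bar> \<partial>M) \<le> (\<integral>x. \<bar>u x\<bar> \<partial>M)"
  using proj_L1_le[OF M g u] sum_cell_abs_le[OF M g u] by linarith

lemma proj_approx:
  fixes k s :: "'a \<Rightarrow> real"
  assumes k: "integrable M k" and s: "integrable M s"
    and const: "\<And>x y. x \<in> space M \<Longrightarrow> y \<in> space M \<Longrightarrow> \<phi> y = \<phi> x \<Longrightarrow> s y = s x"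
  shows "(\<integral>x. \<bar>k x - proj M \<phi> k x\<bar> \<partial>M) \<le> 2 * (\<integral>x. \<bar>k x - s x\<bar> \<partial>M)"
proof -
  have pi: "integrable M (proj M \<phi> u)" for u using proj_int[OF M g] .
  have i0: "integrable M (\<lambda>x. \<bar>k x - proj M \<phi> k x\<bar>)"
    by (intro integrable_abs Bochner_Integration.integrable_diff k pi)
  have i1: "integrable M (\<lambda>x. \<bar>k x - s x\<bar>)"
    by (intro integrable_abs Bochner_Integration.integrable_diff k s)
  have i2: "integrable M (\<lambda>x. \<bar>s x - proj M \<phi> s x\<bar>)"
    by (intro integrable_abs Bochner_Integration.integrable_diff s pi)
  have i3: "integrable M (\<lambda>x. \<bar>proj M \<phi> (\<lambda>y. s y - k y) x\<bar>)"
    by (intro integrable_abs pi)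
  have i12: "integrable M (\<lambda>x. \<bar>k x - s x\<bar> + \<bar>s x - proj M \<phi> s x\<bar>)"
    by (rule Bochner_Integration.integrable_add[OF i1 i2])
  have "(\<integral>x. \<bar>k x - proj M \<phi> k x\<bar> \<partial>M) \<le>
        (\<integral>x. \<bar>k x - s x\<bar> + \<bar>s x - proj M \<phi> s x\<bar> + \<bar>proj M \<phi> (\<lambda>y. s y - k y) x\<bar> \<partial>M)"
  proof (rule integral_mono[OF i0 Bochner_Integration.integrable_add[OF i12 i3]])
    fix x
    show "\<bar>k x - proj M \<phi> k x\<bar> \<le> \<bar>k x - s x\<bar> + \<bar>s x - proj M \<phi> s x\<bar> + \<bar>proj M \<phi> (\<lambda>y. s y - k y) x\<bar>"
      using proj_diff[OF M g s k, of x] by linarith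
  qed
  also have "\<dots> = (\<integral>x. \<bar>k x - s x\<bar> + \<bar>s x - proj M \<phi> s x\<bar> \<partial>M) + (\<integral>x. \<bar>proj M \<phi> (\<lambda>y. s y - k y) x\<bar> \<partial>M)"
    by (rule Bochner_Integration.integral_add[OF i12 i3])
  also have "(\<integral>x. \<bar>k x - s x\<bar> + \<bar>s x - proj M \<phi> s x\<bar> \<partial>M) = (\<integral>x. \<bar>k x - s x\<bar> \<partial>M) + (\<integral>x. \<bar>s x - proj M \<phi> s x\<bar> \<partial>M)"
    by (rule Bochner_Integration.integral_add[OF i1 i2])
  also have "(\<integral>x. \<bar>s x - proj M \<phi> s x\<bar> \<partial>M) = 0"
  proof (rule integral_eq_zero_AE)
    have "AE x in M. proj M \<phi> s x = s x" by (rule proj_exact[OF s const])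
    then show "AE x in M. \<bar>s x - proj M \<phi> s x\<bar> = 0"
      by eventually_elim simp
  qed
  also have "(\<integral>x. \<bar>proj M \<phi> (\<lambda>y. s y - k y) x\<bar> \<partial>M) \<le> (\<integral>x. \<bar>s x - k x\<bar> \<partial>M)"
    by (rule proj_contr[OF Bochner_Integration.integrable_diff[OF s k]])
  also have "(\<integral>x. \<bar>s x - k x\<bar> \<partial>M) = (\<integral>x. \<bar>k x - s x\<bar> \<partial>M)" by (simp add: abs_minus_commute)
  finally show ?thesis by simp
qed

end


lemma simple_approx:
  fixes k :: "'a \<Rightarrow> real"
  assumes k: "integrable M k" and d: "0 < \<delta>"
  shows "\<exists>s. integrable M s \<and> simple_function M s \<and> (\<integral>x. \<bar>k x - s x\<bar> \<partial>M) \<le> \<delta>"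
proof -
  from k obtain I where "has_bochner_integral M k I" by (auto elim: integrable.cases)
  then obtain s where sb: "\<And>i. Bochner_Integration.simple_bochner_integrable M (s i)"
    and lim: "(\<lambda>i. \<integral>\<^sup>+x. norm (k x - s i x) \<partial>M) \<longlonglongrightarrow> 0"
    by (cases rule: has_bochner_integral.cases) blast
  have "0 < ennreal \<delta>" using d by simp
  from order_tendstoD(2)[OF lim this] obtain i where
    lt: "(\<integral>\<^sup>+x. norm (k x - s i x) \<partial>M) < ennreal \<delta>"
    unfolding eventually_sequentially by blast
  have si: "integrable M (s i)"
    by (rule integrable.intros[OF has_bochner_integral_simple_bochner_integrable[OF sb]])
  have sf: "simple_function M (s i)" using sb[of i] by (auto elim: Bochner_Integration.simple_bochner_integrable.cases)
  have ia: "integrable M (\<lambda>x. \<bar>k x - s i x\<bar>)"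
    by (intro integrable_abs Bochner_Integration.integrable_diff k si)
  have "(\<integral>\<^sup>+x. ennreal \<bar>k x - s i x\<bar> \<partial>M) = ennreal (\<integral>x. \<bar>k x - s i x\<bar> \<partial>M)"
    by (rule nn_integral_eq_integral[OF ia]) simp
  then have "ennreal (\<integral>x. \<bar>k x - s i x\<bar> \<partial>M) < ennreal \<delta>" using lt by (simp add: real_norm_def)
  then have "(\<integral>x. \<bar>k x - s i x\<bar> \<partial>M) \<le> \<delta>" using d by (simp add: ennreal_less_iff)
  then show ?thesis using si sf by blast
qed

lemma multi_approx:
  fixes k :: "'i \<Rightarrow> 'a \<Rightarrow> real"
  assumes M: "prob_space M" and N: "finite N" and k: "\<And>i. i \<in> N \<Longrightarrow> integrable M (k i)" and d: "0 < \<delta>"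
  shows "\<exists>\<phi>::'a \<Rightarrow> ('i \<Rightarrow> real). good M \<phi> \<and> (\<forall>i\<in>N. (\<integral>x. \<bar>k i x - proj M \<phi> (k i) x\<bar> \<partial>M) \<le> 2 * \<delta>)"
proof -
  have "\<forall>i\<in>N. \<exists>s. integrable M s \<and> simple_function M s \<and> (\<integral>x. \<bar>k i x - s x\<bar> \<partial>M) \<le> \<delta>"
    using simple_approx[OF k d] by blast
  from bchoice[OF this] obtain s where s0: "\<forall>i\<in>N. integrable M (s i) \<and> simple_function M (s i) \<and> (\<integral>x. \<bar>k i x - s i x\<bar> \<partial>M) \<le> \<delta>"
    by blast
  then have s: "\<And>i. i \<in> N \<Longrightarrow> integrable M (s i) \<and> simple_function M (s i) \<and> (\<integral>x. \<bar>k i x - s i x\<bar> \<partial>M) \<le> \<delta>"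
    by blast
  define \<phi> where "\<phi> x = (\<lambda>i\<in>N. s i x)" for x
  have eq: "\<phi> y = \<phi> x \<longleftrightarrow> (\<forall>i\<in>N. s i y = s i x)" for x y
    unfolding \<phi>_def by (auto simp: fun_eq_iff restrict_def)
  have "\<phi> ` space M \<subseteq> PiE N (\<lambda>i. s i ` space M)" by (auto simp: \<phi>_def)
  moreover have "finite (PiE N (\<lambda>i. s i ` space M))"
    using N s by (intro finite_PiE) (auto dest: simple_functionD(1))
  ultimately have fin: "finite (\<phi> ` space M)" by (rule finite_subset)
  have cs: "cell M \<phi> v \<in> sets M" if v: "v \<in> \<phi> ` space M" for v
  proof -
    from v obtain x where x: "x \<in> space M" and vx: "v = \<phi> x" by auto
    have "cell M \<phi> v = {y \<in> space M. \<forall>i\<in>N. s i y = s i x}" by (auto simp: cell_def vx eq)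
    also have "\<dots> \<in> sets M"
    proof (rule sets.sets_Collect_finite_All[OF _ N])
      fix i assume i: "i \<in> N"
      have "{y \<in> space M. s i y = s i x} = s i -` {s i x} \<inter> space M" by auto
      also have "\<dots> \<in> sets M" using s[OF i] by (auto intro: simple_functionD(2))
      finally show "{y \<in> space M. s i y = s i x} \<in> sets M" .
    qed
    finally show ?thesis .
  qed
  have g: "good M \<phi>" using fin cs by (simp add: good_def)
  have "(\<integral>x. \<bar>k i x - proj M \<phi> (k i) x\<bar> \<partial>M) \<le> 2 * \<delta>" if i: "i \<in> N" for i
  proof -
    have "(\<integral>x. \<bar>k i x - proj M \<phi> (k i) x\<bar> \<partial>M) \<le> 2 * (\<integral>x. \<bar>k i x - s i x\<bar> \<partial>M)"
      by (rule proj_approx[OF M g k[OF i]]) (use s[OF i] eq i in auto)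
    also have "\<dots> \<le> 2 * \<delta>" using s[OF i] by simp
    finally show ?thesis .
  qed
  then show ?thesis using g by blast
qed



definition kd :: "'a measure \<Rightarrow> 'a measure \<Rightarrow> 'a \<Rightarrow> real" where
  "kd M Q = (\<lambda>x. enn2real (RN_deriv M Q x))"

lemma kd_meas[measurable]: "kd M Q \<in> borel_measurable M"
  unfolding kd_def by measurable

lemma kd_nn: "0 \<le> kd M Q x" by (simp add: kd_def)

lemma kd_density:
  assumes M: "prob_space M" and Q: "prob_on M Q" and ac: "absolutely_continuous M Q"
  shows "density M (\<lambda>x. ennreal (kd M Q x)) = Q"
proof -
  interpret sigma_finite_measure M using prob_space_imp_sigma_finite[OF M] .
  have sQ: "sets Q = sets M" and pQ: "prob_space Q" using Q by (auto simp: prob_on_def)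
  have fin: "AE x in M. RN_deriv M Q x \<noteq> \<infinity>"
    by (rule RN_deriv_finite[OF prob_space_imp_sigma_finite[OF pQ] ac sQ])
  have "density M (\<lambda>x. ennreal (kd M Q x)) = density M (RN_deriv M Q)"
    by (rule density_cong) (use fin in \<open>auto simp: kd_def less_top elim!: eventually_mono\<close>)
  also have "\<dots> = Q" by (rule density_RN_deriv[OF ac sQ])
  finally show ?thesis .
qed

lemma kd_basic:
  assumes M: "prob_space M" and Q: "prob_on M Q" and ac: "absolutely_continuous M Q"
  shows "integrable M (kd M Q)" "kd M Q \<in> dens_set M {Q}"
proof -
  show "kd M Q \<in> dens_set M {Q}" using kd_density[OF assms] by (simp add: dens_set_def kd_nn)
  then show "integrable M (kd M Q)" by (rule dens_basic(1)[OF M]) (use Q in auto)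
qed

lemma kd_integral:
  assumes M: "prob_space M" and Q: "prob_on M Q" and ac: "absolutely_continuous M Q"
    and X: "X \<in> borel_measurable M"
  shows "integral\<^sup>L Q X = (\<integral>x. kd M Q x * X x \<partial>M)"
  using integral_density_real[OF kd_meas[of M Q] kd_nn X] unfolding kd_density[OF assms(1-3)] .

lemma kd_measure:
  assumes M: "prob_space M" and Q: "prob_on M Q" and ac: "absolutely_continuous M Q"
    and A: "A \<in> sets M"
  shows "measure Q A = (\<integral>x. kd M Q x * indicator A x \<partial>M)"
proof -
  have sQ: "sets Q = sets M" using Q by (auto simp: prob_on_def)
  have "integral\<^sup>L Q (indicator A :: 'a \<Rightarrow> real) = measure Q (A \<inter> space Q)" by simp
  also have "A \<inter> space Q = A" using A sets.sets_into_space[OF A] sets_eq_imp_space_eq[OF sQ] by auto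
  finally have "measure Q A = integral\<^sup>L Q (indicator A :: 'a \<Rightarrow> real)" by simp
  also have "\<dots> = (\<integral>x. kd M Q x * indicator A x \<partial>M)"
    by (rule kd_integral[OF M Q ac]) (use A in simp)
  finally show ?thesis .
qed

lemma d_tv_bdd:
  assumes "prob_on M Q1" "prob_on M Q2"
  shows "bdd_above ((\<lambda>A. \<bar>measure Q1 A - measure Q2 A\<bar>) ` sets M)"
proof (rule bdd_aboveI2)
  fix A
  have "prob_space Q1" "prob_space Q2" using assms by (auto simp: prob_on_def)
  then have "measure Q1 A \<le> 1" "measure Q2 A \<le> 1" "0 \<le> measure Q1 A" "0 \<le> measure Q2 A"
    by (auto simp: prob_space.prob_le_1)
  then show "\<bar>measure Q1 A - measure Q2 A\<bar> \<le> 1" by linarith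
qed

lemma d_tv_upper:
  assumes "prob_on M Q1" "prob_on M Q2" "A \<in> sets M"
  shows "\<bar>measure Q1 A - measure Q2 A\<bar> \<le> d_tv M Q1 Q2"
  unfolding d_tv_def by (rule cSUP_upper[OF assms(3) d_tv_bdd[OF assms(1,2)]])

lemma d_tv_tri:
  assumes "prob_on M Q1" "prob_on M Q2" "prob_on M Q0"
  shows "d_tv M Q1 Q2 \<le> d_tv M Q1 Q0 + d_tv M Q2 Q0"
  unfolding d_tv_def[of M Q1 Q2]
proof (rule cSUP_least)
  show "sets M \<noteq> {}" using sets.top[of M] by blast
  fix A assume A: "A \<in> sets M"
  have "\<bar>measure Q1 A - measure Q0 A\<bar> \<le> d_tv M Q1 Q0" "\<bar>measure Q2 A - measure Q0 A\<bar> \<le> d_tv M Q2 Q0"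
    using d_tv_upper[OF assms(1,3) A] d_tv_upper[OF assms(2,3) A] by auto
  then show "\<bar>measure Q1 A - measure Q2 A\<bar> \<le> d_tv M Q1 Q0 + d_tv M Q2 Q0" by linarith
qed

lemma L1_le_tv:
  assumes M: "prob_space M" and Q1: "prob_on M Q1" "absolutely_continuous M Q1"
    and Q2: "prob_on M Q2" "absolutely_continuous M Q2"
  shows "(\<integral>x. \<bar>kd M Q1 x - kd M Q2 x\<bar> \<partial>M) \<le> 2 * d_tv M Q1 Q2"
proof -
  define A where "A = {x \<in> space M. kd M Q2 x \<le> kd M Q1 x}"
  define B where "B = space M - A"
  have A: "A \<in> sets M" unfolding A_def by measurable
  have B: "B \<in> sets M" unfolding B_def using A by auto
  have i1: "integrable M (kd M Q1)" and i2: "integrable M (kd M Q2)"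
    using kd_basic(1)[OF M Q1] kd_basic(1)[OF M Q2] by auto
  have iA: "integrable M (\<lambda>x. f x * indicator A x)" if "integrable M f" for f :: "'a \<Rightarrow> real"
    using integrable_mult_indicator[OF A that] by (simp add: mult.commute)
  have iB: "integrable M (\<lambda>x. f x * indicator B x)" if "integrable M f" for f :: "'a \<Rightarrow> real"
    using integrable_mult_indicator[OF B that] by (simp add: mult.commute)
  have "(\<integral>x. \<bar>kd M Q1 x - kd M Q2 x\<bar> \<partial>M) =
     (\<integral>x. (kd M Q1 x * indicator A x - kd M Q2 x * indicator A x) - (kd M Q1 x * indicator B x - kd M Q2 x * indicator B x) \<partial>M)"
    by (rule Bochner_Integration.integral_cong[OF refl]) (auto simp: A_def B_def indicator_def)
  also have "\<dots> = ((\<integral>x. kd M Q1 x * indicator A x \<partial>M) - (\<integral>x. kd M Q2 x * indicator A x \<partial>M))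
      - ((\<integral>x. kd M Q1 x * indicator B x \<partial>M) - (\<integral>x. kd M Q2 x * indicator B x \<partial>M))"
    using iA[OF i1] iA[OF i2] iB[OF i1] iB[OF i2]
    by (simp add: Bochner_Integration.integral_diff Bochner_Integration.integrable_diff)
  also have "\<dots> = (measure Q1 A - measure Q2 A) - (measure Q1 B - measure Q2 B)"
    using kd_measure[OF M Q1 A] kd_measure[OF M Q2 A] kd_measure[OF M Q1 B] kd_measure[OF M Q2 B] by simp
  also have "\<dots> \<le> d_tv M Q1 Q2 + d_tv M Q1 Q2"
    using d_tv_upper[OF Q1(1) Q2(1) A] d_tv_upper[OF Q1(1) Q2(1) B] by linarith
  finally show ?thesis by simp
qed



fun build :: "('b list \<Rightarrow> 'b) \<Rightarrow> nat \<Rightarrow> 'b list" where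
  "build c 0 = []"
| "build c (Suc n) = build c n @ [c (build c n)]"

lemma build_set: "m < n \<Longrightarrow> c (build c m) \<in> set (build c n)"
proof (induction n)
  case 0 then show ?case by simp
next
  case (Suc n)
  then show ?case by (cases "m = n") auto
qed

lemma build_in: "(\<And>L. set L \<subseteq> S \<Longrightarrow> c L \<in> S) \<Longrightarrow> set (build c n) \<subseteq> S"
  by (induction n) auto

lemma totally_bounded_Qs:
  assumes M: "prob_space M" and Qs: "\<And>Q. Q \<in> Qs \<Longrightarrow> prob_on M Q \<and> absolutely_continuous M Q"
    and tv: "tv_relcompact M Qs" and d: "0 < \<delta>"
  shows "\<exists>N. finite N \<and> N \<subseteq> Qs \<and> (\<forall>Q\<in>Qs. \<exists>Q'\<in>N. (\<integral>x. \<bar>kd M Q x - kd M Q' x\<bar> \<partial>M) \<le> \<delta>)"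
proof (rule ccontr)
  define D where "D Q Q' = (\<integral>x. \<bar>kd M Q x - kd M Q' x\<bar> \<partial>M)" for Q Q'
  assume "\<not> ?thesis"
  then have H: "\<And>N. finite N \<Longrightarrow> N \<subseteq> Qs \<Longrightarrow> \<exists>Q\<in>Qs. \<forall>Q'\<in>N. \<delta> < D Q Q'"
    unfolding D_def by (meson not_le)
  define c where "c L = (SOME Q. Q \<in> Qs \<and> (\<forall>Q'\<in>set L. \<delta> < D Q Q'))" for L
  have cS: "c L \<in> Qs \<and> (\<forall>Q'\<in>set L. \<delta> < D (c L) Q')" if "set L \<subseteq> Qs" for L
  proof -
    have "\<exists>Q. Q \<in> Qs \<and> (\<forall>Q'\<in>set L. \<delta> < D Q Q')" using H[OF finite_set that] by blast
    then show ?thesis unfolding c_def by (rule someI_ex)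
  qed
  have bS: "set (build c n) \<subseteq> Qs" for n by (rule build_in) (use cS in blast)
  define q where "q n = c (build c n)" for n
  have qQ: "q n \<in> Qs" for n using cS[OF bS[of n]] by (simp add: q_def)
  have far: "\<delta> < D (q n) (q m)" if "m < n" for m n
    using cS[OF bS[of n]] build_set[OF that, of c] by (simp add: q_def)
  have qp: "prob_on M (q n)" "absolutely_continuous M (q n)" for n using Qs[OF qQ[of n]] by auto
  from tv[unfolded tv_relcompact_def, rule_format, of q] qQ obtain r Q0 where
    r: "strict_mono r" and Q0: "prob_on M Q0" and lim: "(\<lambda>n. d_tv M (q (r n)) Q0) \<longlonglongrightarrow> 0"
    by blast
  have "0 < \<delta> / 4" using d by simp
  from lim[THEN tendstoD, OF this] obtain N0 where N0: "\<And>n. n \<ge> N0 \<Longrightarrow> dist (d_tv M (q (r n)) Q0) 0 < \<delta> / 4"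
    unfolding eventually_sequentially by blast
  have a1: "d_tv M (q (r N0)) Q0 < \<delta> / 4" using N0[of N0] by (simp add: dist_real_def)
  have a2: "d_tv M (q (r (Suc N0))) Q0 < \<delta> / 4" using N0[of "Suc N0"] by (simp add: dist_real_def)
  have "D (q (r (Suc N0))) (q (r N0)) \<le> 2 * d_tv M (q (r (Suc N0))) (q (r N0))"
    unfolding D_def by (rule L1_le_tv[OF M qp qp])
  also have "\<dots> \<le> 2 * (d_tv M (q (r (Suc N0))) Q0 + d_tv M (q (r N0)) Q0)"
    using d_tv_tri[OF qp(1)[of "r (Suc N0)"] qp(1)[of "r N0"] Q0] by simp
  also have "\<dots> < \<delta>" using a1 a2 by simp
  finally have "D (q (r (Suc N0))) (q (r N0)) < \<delta>" .
  moreover have "\<delta> < D (q (r (Suc N0))) (q (r N0))"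
    by (rule far) (use r in \<open>simp add: strict_mono_def\<close>)
  ultimately show False by simp
qed



lemma proj_err_tri:
  fixes k k' :: "'a \<Rightarrow> real"
  assumes M: "prob_space M" and g: "good M \<phi>" and k: "integrable M k" and k': "integrable M k'"
  shows "(\<integral>x. \<bar>k x - proj M \<phi> k x\<bar> \<partial>M) \<le>
    2 * (\<integral>x. \<bar>k x - k' x\<bar> \<partial>M) + (\<integral>x. \<bar>k' x - proj M \<phi> k' x\<bar> \<partial>M)"
proof -
  have pi: "integrable M (proj M \<phi> u)" for u using proj_int[OF M g] .
  have i0: "integrable M (\<lambda>x. \<bar>k x - proj M \<phi> k x\<bar>)"
    by (intro integrable_abs Bochner_Integration.integrable_diff k pi)
  have i1: "integrable M (\<lambda>x. \<bar>k x - k' x\<bar>)"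
    by (intro integrable_abs Bochner_Integration.integrable_diff k k')
  have i2: "integrable M (\<lambda>x. \<bar>k' x - proj M \<phi> k' x\<bar>)"
    by (intro integrable_abs Bochner_Integration.integrable_diff k' pi)
  have i3: "integrable M (\<lambda>x. \<bar>proj M \<phi> (\<lambda>y. k' y - k y) x\<bar>)"
    by (intro integrable_abs pi)
  have i12: "integrable M (\<lambda>x. \<bar>k x - k' x\<bar> + \<bar>k' x - proj M \<phi> k' x\<bar>)"
    by (rule Bochner_Integration.integrable_add[OF i1 i2])
  have "(\<integral>x. \<bar>k x - proj M \<phi> k x\<bar> \<partial>M) \<le>
        (\<integral>x. \<bar>k x - k' x\<bar> + \<bar>k' x - proj M \<phi> k' x\<bar> + \<bar>proj M \<phi> (\<lambda>y. k' y - k y) x\<bar> \<partial>M)"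
  proof (rule integral_mono[OF i0 Bochner_Integration.integrable_add[OF i12 i3]])
    fix x
    show "\<bar>k x - proj M \<phi> k x\<bar> \<le> \<bar>k x - k' x\<bar> + \<bar>k' x - proj M \<phi> k' x\<bar> + \<bar>proj M \<phi> (\<lambda>y. k' y - k y) x\<bar>"
      using proj_diff[OF M g k' k, of x] by linarith
  qed
  also have "\<dots> = (\<integral>x. \<bar>k x - k' x\<bar> + \<bar>k' x - proj M \<phi> k' x\<bar> \<partial>M) + (\<integral>x. \<bar>proj M \<phi> (\<lambda>y. k' y - k y) x\<bar> \<partial>M)"
    by (rule Bochner_Integration.integral_add[OF i12 i3])
  also have "(\<integral>x. \<bar>k x - k' x\<bar> + \<bar>k' x - proj M \<phi> k' x\<bar> \<partial>M) = (\<integral>x. \<bar>k x - k' x\<bar> \<partial>M) + (\<integral>x. \<bar>k' x - proj M \<phi> k' x\<bar> \<partial>M)"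
    by (rule Bochner_Integration.integral_add[OF i1 i2])
  also have "(\<integral>x. \<bar>proj M \<phi> (\<lambda>y. k' y - k y) x\<bar> \<partial>M) \<le> (\<integral>x. \<bar>k' x - k x\<bar> \<partial>M)"
    by (rule proj_contr[OF M g Bochner_Integration.integrable_diff[OF k' k]])
  also have "(\<integral>x. \<bar>k' x - k x\<bar> \<partial>M) = (\<integral>x. \<bar>k x - k' x\<bar> \<partial>M)" by (simp add: abs_minus_commute)
  finally show ?thesis by simp
qed

lemma uniform_approx:
  assumes M: "prob_space M" and Qs: "\<And>Q. Q \<in> Qs \<Longrightarrow> prob_on M Q \<and> absolutely_continuous M Q"
    and tv: "tv_relcompact M Qs" and e: "0 < \<epsilon>"
  shows "\<exists>\<phi>::'a \<Rightarrow> ('a measure \<Rightarrow> real). good M \<phi> \<and>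
    (\<forall>Q\<in>Qs. (\<integral>x. \<bar>kd M Q x - proj M \<phi> (kd M Q) x\<bar> \<partial>M) \<le> \<epsilon>)"
proof -
  have e4: "0 < \<epsilon> / 4" using e by simp
  obtain N where N: "finite N" "N \<subseteq> Qs"
    and close: "\<And>Q. Q \<in> Qs \<Longrightarrow> \<exists>Q'\<in>N. (\<integral>x. \<bar>kd M Q x - kd M Q' x\<bar> \<partial>M) \<le> \<epsilon> / 4"
    using totally_bounded_Qs[OF M Qs tv e4] by blast
  have ki: "integrable M (kd M Q)" if "Q \<in> Qs" for Q
    using kd_basic(1)[of M Q] M Qs[OF that] by auto
  obtain \<phi> :: "'a \<Rightarrow> ('a measure \<Rightarrow> real)" where g: "good M \<phi>"
    and ap: "\<And>Q'. Q' \<in> N \<Longrightarrow> (\<integral>x. \<bar>kd M Q' x - proj M \<phi> (kd M Q') x\<bar> \<partial>M) \<le> 2 * (\<epsilon> / 4)"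
    using multi_approx[OF M N(1) _ e4, of "kd M"] ki N(2) by blast
  have "(\<integral>x. \<bar>kd M Q x - proj M \<phi> (kd M Q) x\<bar> \<partial>M) \<le> \<epsilon>" if Q: "Q \<in> Qs" for Q
  proof -
    obtain Q' where Q': "Q' \<in> N" and c: "(\<integral>x. \<bar>kd M Q x - kd M Q' x\<bar> \<partial>M) \<le> \<epsilon> / 4"
      using close[OF Q] by blast
    have "(\<integral>x. \<bar>kd M Q x - proj M \<phi> (kd M Q) x\<bar> \<partial>M) \<le>
      2 * (\<integral>x. \<bar>kd M Q x - kd M Q' x\<bar> \<partial>M) + (\<integral>x. \<bar>kd M Q' x - proj M \<phi> (kd M Q') x\<bar> \<partial>M)"
      by (rule proj_err_tri[OF M g ki[OF Q] ki]) (use Q' N(2) in auto)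
    also have "\<dots> \<le> \<epsilon>" using c ap[OF Q'] by simp
    finally show ?thesis .
  qed
  then show ?thesis using g by blast
qed



lemma adj_identity:
  fixes g X :: "'a \<Rightarrow> real"
  assumes M: "prob_space M" and gd: "good M \<phi>" and g: "integrable M g"
    and X: "integrable M X" "AE x in M. \<bar>X x\<bar> \<le> 1"
  shows "(\<integral>x. g x * (X x - proj M \<phi> X x) \<partial>M) = (\<integral>x. (g x - proj M \<phi> g x) * X x \<partial>M)"
proof -
  have Xm: "X \<in> borel_measurable M" using X(1) by (rule borel_measurable_integrable)
  have i1: "integrable M (\<lambda>x. g x * X x)" by (rule int_mult_bdd[OF g Xm X(2)])
  have i2: "integrable M (\<lambda>x. g x * proj M \<phi> X x)" by (rule int_mult_proj[OF M gd g])
  have i3: "integrable M (\<lambda>x. proj M \<phi> g x * X x)" by (rule int_mult_bdd[OF proj_int[OF M gd] Xm X(2)])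
  have "(\<integral>x. g x * (X x - proj M \<phi> X x) \<partial>M) = (\<integral>x. g x * X x - g x * proj M \<phi> X x \<partial>M)"
    by (simp add: right_diff_distrib)
  also have "\<dots> = (\<integral>x. g x * X x \<partial>M) - (\<integral>x. g x * proj M \<phi> X x \<partial>M)"
    by (rule Bochner_Integration.integral_diff[OF i1 i2])
  also have "(\<integral>x. g x * proj M \<phi> X x \<partial>M) = (\<integral>x. proj M \<phi> g x * X x \<partial>M)"
    by (rule proj_selfadj[OF M gd g X(1), symmetric])
  also have "(\<integral>x. g x * X x \<partial>M) - (\<integral>x. proj M \<phi> g x * X x \<partial>M) = (\<integral>x. g x * X x - proj M \<phi> g x * X x \<partial>M)"
    by (rule Bochner_Integration.integral_diff[OF i1 i3, symmetric])
  also have "\<dots> = (\<integral>x. (g x - proj M \<phi> g x) * X x \<partial>M)"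
    by (simp add: left_diff_distrib)
  finally show ?thesis .
qed

lemma qhat_proj_err:
  assumes M: "prob_space M" and Qne: "Qs \<noteq> {}"
    and Qs: "\<And>Q. Q \<in> Qs \<Longrightarrow> prob_on M Q \<and> absolutely_continuous M Q"
    and gd: "good M \<phi>"
    and err: "\<And>Q. Q \<in> Qs \<Longrightarrow> (\<integral>x. \<bar>kd M Q x - proj M \<phi> (kd M Q) x\<bar> \<partial>M) \<le> \<epsilon>"
    and f: "f \<in> dens_set M (Qhat M Qs)"
  shows "(\<integral>x. \<bar>f x - proj M \<phi> f x\<bar> \<partial>M) \<le> \<epsilon>"
proof -
  interpret prob_space M by (rule M)
  have Qp: "\<And>Q. Q \<in> Qhat M Qs \<Longrightarrow> prob_on M Q" by (auto simp: Qhat_def)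
  have fi: "integrable M f" by (rule dens_basic(1)[OF M f Qp])
  define u where "u x = f x - proj M \<phi> f x" for x
  have ui: "integrable M u" unfolding u_def by (intro Bochner_Integration.integrable_diff fi proj_int[OF M gd])
  define X where "X x = sgn (u x)" for x
  have Xm: "X \<in> borel_measurable M" unfolding X_def using borel_measurable_integrable[OF ui] by measurable
  have Xb: "\<bar>X x\<bar> \<le> 1" for x by (simp add: X_def abs_sgn_eq)
  have XbAE: "AE x in M. \<bar>X x\<bar> \<le> 1" using Xb by simp
  have Xi: "integrable M X" by (rule integrable_const_bound[where B=1]) (use Xb Xm in auto)
  define Y where "Y x = X x - proj M \<phi> X x" for x
  have Ym: "Y \<in> borel_measurable M" unfolding Y_def using Xm proj_meas[OF M gd] by measurable
  have Yb: "\<bar>Y x\<bar> \<le> 2" for x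
    using Xb[of x] proj_bdd[OF M gd Xi XbAE, of x] unfolding Y_def by linarith
  have key: "(\<integral>x. g x * Y x \<partial>M) = (\<integral>x. (g x - proj M \<phi> g x) * X x \<partial>M)" if "integrable M g" for g
    unfolding Y_def by (rule adj_identity[OF M gd that Xi XbAE])
  have "(\<integral>x. \<bar>u x\<bar> \<partial>M) = (\<integral>x. u x * X x \<partial>M)"
    by (rule Bochner_Integration.integral_cong[OF refl]) (simp add: X_def abs_sgn)
  also have "\<dots> = (\<integral>x. f x * Y x \<partial>M)" using key[OF fi] by (simp add: u_def)
  finally have uY: "(\<integral>x. \<bar>u x\<bar> \<partial>M) = (\<integral>x. f x * Y x \<partial>M)" .
  have eb: "ess_bounded M (\<lambda>x. - Y x)"
    unfolding ess_bounded_def using Ym Yb by (auto intro!: exI[of _ 2])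
  have lowQ: "- \<epsilon> \<le> integral\<^sup>L Q (\<lambda>x. - Y x)" if Q: "Q \<in> Qs" for Q
  proof -
    have QQ: "prob_on M Q" "absolutely_continuous M Q" using Qs[OF Q] by auto
    have ki: "integrable M (kd M Q)" using kd_basic(1)[OF M QQ] .
    have pki: "integrable M (\<lambda>x. kd M Q x - proj M \<phi> (kd M Q) x)"
      by (intro Bochner_Integration.integrable_diff ki proj_int[OF M gd])
    have "integral\<^sup>L Q (\<lambda>x. - Y x) = (\<integral>x. kd M Q x * - Y x \<partial>M)"
      by (rule kd_integral[OF M QQ]) (use Ym in measurable)
    also have "\<dots> = - (\<integral>x. kd M Q x * Y x \<partial>M)" by simp
    finally have B: "integral\<^sup>L Q (\<lambda>x. - Y x) = - (\<integral>x. kd M Q x * Y x \<partial>M)" .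
    have "(\<integral>x. kd M Q x * Y x \<partial>M) = (\<integral>x. (kd M Q x - proj M \<phi> (kd M Q) x) * X x \<partial>M)"
      by (rule key[OF ki])
    also have "\<dots> \<le> (\<integral>x. \<bar>(kd M Q x - proj M \<phi> (kd M Q) x) * X x\<bar> \<partial>M)"
      by (rule order_trans[OF abs_ge_self integral_abs_bound])
    also have "\<dots> \<le> (\<integral>x. \<bar>kd M Q x - proj M \<phi> (kd M Q) x\<bar> \<partial>M)"
    proof (rule integral_mono)
      show "integrable M (\<lambda>x. \<bar>(kd M Q x - proj M \<phi> (kd M Q) x) * X x\<bar>)"
        by (intro integrable_abs int_mult_bdd[OF pki Xm XbAE])
      show "integrable M (\<lambda>x. \<bar>kd M Q x - proj M \<phi> (kd M Q) x\<bar>)" by (intro integrable_abs pki)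
      fix x
      show "\<bar>(kd M Q x - proj M \<phi> (kd M Q) x) * X x\<bar> \<le> \<bar>kd M Q x - proj M \<phi> (kd M Q) x\<bar>"
        using Xb[of x] by (simp add: abs_mult mult_left_le)
    qed
    also have "\<dots> \<le> \<epsilon>" by (rule err[OF Q])
    finally show ?thesis using B by simp
  qed
  have "- \<epsilon> \<le> (INF Q'\<in>Qs. integral\<^sup>L Q' (\<lambda>x. - Y x))"
    by (rule cINF_greatest[OF Qne lowQ])
  also have "\<dots> \<le> (\<integral>x. f x * - Y x \<partial>M)" by (rule qhat_ineq[OF f eb])
  also have "\<dots> = - (\<integral>x. f x * Y x \<partial>M)" by simp
  finally have "(\<integral>x. f x * Y x \<partial>M) \<le> \<epsilon>" by simp
  then show ?thesis using uY by (simp add: u_def)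
qed



lemma finite_bw:
  fixes a :: "nat \<Rightarrow> 'v \<Rightarrow> real"
  assumes "finite V" and "\<And>n v. v \<in> V \<Longrightarrow> \<bar>a n v\<bar> \<le> B"
  shows "\<exists>r L. strict_mono r \<and> (\<forall>v\<in>V. (\<lambda>n. a (r n) v) \<longlonglongrightarrow> L v)"
  using assms
proof (induction V rule: finite_induct)
  case empty
  show ?case by (rule exI[of _ id]) (auto simp: strict_mono_def)
next
  case (insert w V)
  from insert.IH insert.prems obtain r L where r: "strict_mono r" and L: "\<forall>v\<in>V. (\<lambda>n. a (r n) v) \<longlonglongrightarrow> L v"
    by blast
  have "bounded (range (\<lambda>n. a (r n) w))"
    unfolding bounded_iff using insert.prems by (auto intro!: exI[of _ B])
  from bounded_imp_convergent_subsequence[OF this] obtain l s where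
    s: "strict_mono s" and ls: "((\<lambda>n. a (r n) w) \<circ> s) \<longlonglongrightarrow> l" by blast
  have "strict_mono (r \<circ> s)" using r s by (rule strict_mono_o)
  moreover have "\<forall>v\<in>insert w V. (\<lambda>n. a ((r \<circ> s) n) v) \<longlonglongrightarrow> (L(w := l)) v"
  proof
    fix v assume v: "v \<in> insert w V"
    show "(\<lambda>n. a ((r \<circ> s) n) v) \<longlonglongrightarrow> (L(w := l)) v"
    proof (cases "v = w")
      case True then show ?thesis using ls by (simp add: comp_def)
    next
      case False
      then have "v \<in> V" using v by simp
      then have "((\<lambda>n. a (r n) v) \<circ> s) \<longlonglongrightarrow> L v" using L s by (intro LIMSEQ_subseq_LIMSEQ) auto
      then show ?thesis using False by (simp add: comp_def)
    qed
  qed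
  ultimately show ?case by blast
qed

definition L1Cauchy :: "'a measure \<Rightarrow> (nat \<Rightarrow> 'a \<Rightarrow> real) \<Rightarrow> bool" where
  "L1Cauchy M f \<longleftrightarrow> (\<forall>e>0. \<exists>N. \<forall>a\<ge>N. \<forall>b\<ge>N. (\<integral>x. \<bar>f a x - f b x\<bar> \<partial>M) \<le> e)"

lemma level_extract:
  fixes f :: "nat \<Rightarrow> 'a \<Rightarrow> real"
  assumes M: "prob_space M" and Qne: "Qs \<noteq> {}"
    and Qs: "\<And>Q. Q \<in> Qs \<Longrightarrow> prob_on M Q \<and> absolutely_continuous M Q"
    and tv: "tv_relcompact M Qs" and e: "0 < e"
    and f: "\<And>n. f n \<in> dens_set M (Qhat M Qs)"
  shows "\<exists>r::nat\<Rightarrow>nat. strict_mono r \<and> (\<exists>N. \<forall>a\<ge>N. \<forall>b\<ge>N. (\<integral>x. \<bar>f (r a) x - f (r b) x\<bar> \<partial>M) \<le> 3 * e)"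
proof -
  interpret prob_space M by (rule M)
  obtain \<phi> :: "'a \<Rightarrow> ('a measure \<Rightarrow> real)" where gd: "good M \<phi>"
    and err: "\<And>Q. Q \<in> Qs \<Longrightarrow> (\<integral>x. \<bar>kd M Q x - proj M \<phi> (kd M Q) x\<bar> \<partial>M) \<le> e"
    using uniform_approx[OF M Qs tv e] by blast
  have ferr: "(\<integral>x. \<bar>f n x - proj M \<phi> (f n) x\<bar> \<partial>M) \<le> e" for n
    by (rule qhat_proj_err[OF M Qne Qs gd err f])
  have Qp: "\<And>Q. Q \<in> Qhat M Qs \<Longrightarrow> prob_on M Q" by (auto simp: Qhat_def)
  have fi: "integrable M (f n)" for n by (rule dens_basic(1)[OF M f Qp])
  have f1: "integral\<^sup>L M (f n) = 1" for n by (rule dens_basic(2)[OF M f Qp])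
  have fnn: "0 \<le> f n x" if "x \<in> space M" for n x by (rule dens_basic(4)[OF M f Qp that])
  define V where "V = \<phi> ` space M"
  have finV: "finite V" using gd by (simp add: good_def V_def)
  define a where "a n v = (\<integral>x. f n x * indicator (cell M \<phi> v) x \<partial>M)" for n v
  have abd: "\<bar>a n v\<bar> \<le> 1" if "v \<in> V" for n v
  proof -
    have v: "v \<in> \<phi> ` space M" using that by (simp add: V_def)
    have "\<bar>a n v\<bar> \<le> (\<Sum>w\<in>\<phi> ` space M. \<bar>\<integral>x. f n x * indicator (cell M \<phi> w) x \<partial>M\<bar>)"
      unfolding a_def using fin[OF M gd] v by (intro member_le_sum) auto
    also have "\<dots> \<le> (\<integral>x. \<bar>f n x\<bar> \<partial>M)" by (rule sum_cell_abs_le[OF M gd fi])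
    also have "(\<integral>x. \<bar>f n x\<bar> \<partial>M) = (\<integral>x. f n x \<partial>M)"
      by (rule Bochner_Integration.integral_cong[OF refl]) (simp add: fnn)
    finally show ?thesis using f1 by simp
  qed
  obtain r L where r: "strict_mono r" and L: "\<forall>v\<in>V. (\<lambda>n. a (r n) v) \<longlonglongrightarrow> L v"
    using finite_bw[where a=a and B=1, OF finV abd] by blast
  define S where "S n = (\<Sum>v\<in>V. \<bar>a (r n) v - L v\<bar>)" for n
  have "S \<longlonglongrightarrow> (\<Sum>v\<in>V. \<bar>L v - L v\<bar>)"
    unfolding S_def using L by (intro tendsto_sum tendsto_rabs tendsto_diff tendsto_const) auto
  then have S0: "S \<longlonglongrightarrow> 0" by simp
  have "0 < e / 2" using e by simp
  from S0[THEN tendstoD, OF this] obtain N where N: "\<And>n. n \<ge> N \<Longrightarrow> dist (S n) 0 < e / 2"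
    unfolding eventually_sequentially by blast
  have "(\<integral>x. \<bar>f (r n) x - f (r m) x\<bar> \<partial>M) \<le> 3 * e" if n: "n \<ge> N" and m: "m \<ge> N" for n m
  proof -
    define u where "u x = f (r n) x - f (r m) x" for x
    have ui: "integrable M u" unfolding u_def using fi by auto
    have pd: "proj M \<phi> u x = proj M \<phi> (f (r n)) x - proj M \<phi> (f (r m)) x" for x
      unfolding u_def by (rule proj_diff[OF M gd fi fi])
    have pi: "integrable M (proj M \<phi> h)" for h using proj_int[OF M gd] .
    have i1: "integrable M (\<lambda>x. \<bar>f (r n) x - proj M \<phi> (f (r n)) x\<bar>)"
      by (intro integrable_abs Bochner_Integration.integrable_diff fi pi)
    have i2: "integrable M (\<lambda>x. \<bar>f (r m) x - proj M \<phi> (f (r m)) x\<bar>)"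
      by (intro integrable_abs Bochner_Integration.integrable_diff fi pi)
    have i3: "integrable M (\<lambda>x. \<bar>proj M \<phi> u x\<bar>)" by (intro integrable_abs pi)
    have i0: "integrable M (\<lambda>x. \<bar>f (r n) x - f (r m) x\<bar>)"
      by (intro integrable_abs Bochner_Integration.integrable_diff fi)
    have i12: "integrable M (\<lambda>x. \<bar>f (r n) x - proj M \<phi> (f (r n)) x\<bar> + \<bar>f (r m) x - proj M \<phi> (f (r m)) x\<bar>)"
      by (rule Bochner_Integration.integrable_add[OF i1 i2])
    have "(\<integral>x. \<bar>f (r n) x - f (r m) x\<bar> \<partial>M) \<le>
      (\<integral>x. \<bar>f (r n) x - proj M \<phi> (f (r n)) x\<bar> + \<bar>f (r m) x - proj M \<phi> (f (r m)) x\<bar> + \<bar>proj M \<phi> u x\<bar> \<partial>M)"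
    proof (rule integral_mono[OF i0 Bochner_Integration.integrable_add[OF i12 i3]])
      fix x show "\<bar>f (r n) x - f (r m) x\<bar> \<le> \<bar>f (r n) x - proj M \<phi> (f (r n)) x\<bar> + \<bar>f (r m) x - proj M \<phi> (f (r m)) x\<bar> + \<bar>proj M \<phi> u x\<bar>"
        using pd[of x] by linarith
    qed
    also have "\<dots> = (\<integral>x. \<bar>f (r n) x - proj M \<phi> (f (r n)) x\<bar> + \<bar>f (r m) x - proj M \<phi> (f (r m)) x\<bar> \<partial>M) + (\<integral>x. \<bar>proj M \<phi> u x\<bar> \<partial>M)"
      by (rule Bochner_Integration.integral_add[OF i12 i3])
    also have "(\<integral>x. \<bar>f (r n) x - proj M \<phi> (f (r n)) x\<bar> + \<bar>f (r m) x - proj M \<phi> (f (r m)) x\<bar> \<partial>M) =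
       (\<integral>x. \<bar>f (r n) x - proj M \<phi> (f (r n)) x\<bar> \<partial>M) + (\<integral>x. \<bar>f (r m) x - proj M \<phi> (f (r m)) x\<bar> \<partial>M)"
      by (rule Bochner_Integration.integral_add[OF i1 i2])
    also have "(\<integral>x. \<bar>proj M \<phi> u x\<bar> \<partial>M) \<le> (\<Sum>v\<in>V. \<bar>\<integral>x. u x * indicator (cell M \<phi> v) x \<partial>M\<bar>)"
      unfolding V_def by (rule proj_L1_le[OF M gd ui])
    also have "(\<Sum>v\<in>V. \<bar>\<integral>x. u x * indicator (cell M \<phi> v) x \<partial>M\<bar>) = (\<Sum>v\<in>V. \<bar>a (r n) v - a (r m) v\<bar>)"
    proof (rule sum.cong[OF refl])
      fix v assume "v \<in> V"
      then have v: "v \<in> \<phi> ` space M" by (simp add: V_def)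
      have "(\<integral>x. u x * indicator (cell M \<phi> v) x \<partial>M) =
        (\<integral>x. f (r n) x * indicator (cell M \<phi> v) x - f (r m) x * indicator (cell M \<phi> v) x \<partial>M)"
        by (simp add: u_def left_diff_distrib)
      also have "\<dots> = a (r n) v - a (r m) v"
        unfolding a_def by (rule Bochner_Integration.integral_diff[OF int_u_ind[OF M gd fi v] int_u_ind[OF M gd fi v]])
      finally show "\<bar>\<integral>x. u x * indicator (cell M \<phi> v) x \<partial>M\<bar> = \<bar>a (r n) v - a (r m) v\<bar>" by simp
    qed
    also have "(\<Sum>v\<in>V. \<bar>a (r n) v - a (r m) v\<bar>) \<le> S n + S m"
    proof -
      have "(\<Sum>v\<in>V. \<bar>a (r n) v - a (r m) v\<bar>) \<le> (\<Sum>v\<in>V. \<bar>a (r n) v - L v\<bar> + \<bar>a (r m) v - L v\<bar>)"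
        by (rule ordered_comm_monoid_add_class.sum_mono) linarith
      also have "\<dots> = S n + S m" by (simp add: S_def sum.distrib)
      finally show ?thesis .
    qed
    finally have "(\<integral>x. \<bar>f (r n) x - f (r m) x\<bar> \<partial>M) \<le> e + e + (S n + S m)"
      using ferr[of "r n"] ferr[of "r m"] by linarith
    moreover have "S n < e / 2" "S m < e / 2" using N[OF n] N[OF m] by (auto simp: dist_real_def)
    ultimately show ?thesis by linarith
  qed
  then have fin3: "\<forall>a\<ge>N. \<forall>b\<ge>N. (\<integral>x. \<bar>f (r a) x - f (r b) x\<bar> \<partial>M) \<le> 3 * e" by blast
  show ?thesis
  proof (intro exI conjI)
    show "strict_mono r" by (rule r)
    show "\<forall>a\<ge>N. \<forall>b\<ge>N. (\<integral>x. \<bar>f (r a) x - f (r b) x\<bar> \<partial>M) \<le> 3 * e" by (rule fin3)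
  qed
qed



lemma L1_complete:
  fixes f :: "nat \<Rightarrow> 'a \<Rightarrow> real"
  assumes fi: "\<And>n. integrable M (f n)" and C: "L1Cauchy M f"
  shows "\<exists>g. integrable M g \<and> L1_conv M f g"
proof -
  have fm[measurable]: "f n \<in> borel_measurable M" for n using fi[of n] by (rule borel_measurable_integrable)
  define D where "D a b = (\<integral>x. \<bar>f a x - f b x\<bar> \<partial>M)" for a b
  have Dnn: "0 \<le> D a b" for a b unfolding D_def by (intro integral_nonneg_AE) auto
  have iab: "integrable M (\<lambda>x. \<bar>f a x - f b x\<bar>)" for a b
    by (intro integrable_abs Bochner_Integration.integrable_diff fi)
  have ennD: "(\<integral>\<^sup>+x. ennreal \<bar>f a x - f b x\<bar> \<partial>M) = ennreal (D a b)" for a b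
    unfolding D_def by (rule nn_integral_eq_integral[OF iab]) simp
  have "\<forall>k. \<exists>N. \<forall>a\<ge>N. \<forall>b\<ge>N. D a b \<le> (1/2)^k"
  proof
    fix k :: nat
    have "0 < (1/2::real)^k" by simp
    then show "\<exists>N. \<forall>a\<ge>N. \<forall>b\<ge>N. D a b \<le> (1/2)^k" using C unfolding L1Cauchy_def D_def by blast
  qed
  then obtain Nf where Nf: "\<And>k a b. a \<ge> Nf k \<Longrightarrow> b \<ge> Nf k \<Longrightarrow> D a b \<le> (1/2)^k"
    by metis
  define r where "r k = (\<Sum>j\<le>k. Nf j) + k" for k
  have rmono: "strict_mono r" unfolding strict_mono_Suc_iff by (simp add: r_def)
  have rN: "Nf k \<le> r k" for k
  proof -
    have "Nf k \<le> (\<Sum>j\<le>k. Nf j)" by (rule member_le_sum) auto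
    then show ?thesis by (simp add: r_def)
  qed
  have rge: "k \<le> r k" for k by (simp add: r_def)
  define g where "g k = f (r k)" for k
  have gm[measurable]: "g k \<in> borel_measurable M" for k by (simp add: g_def)
  have Dg: "D (r (Suc k)) (r k) \<le> (1/2)^k" for k
  proof (rule Nf)
    show "Nf k \<le> r k" by (rule rN)
    have "r k < r (Suc k)" using rmono by (simp add: strict_mono_Suc_iff)
    then show "Nf k \<le> r (Suc k)" using rN[of k] by simp
  qed
  have sumD: "summable (\<lambda>k. D (r (Suc k)) (r k))"
    by (rule summable_comparison_test[OF _ summable_geometric[of "1/2::real"]]) (use Dg Dnn in auto)
  define S where "S x = (\<Sum>k. ennreal \<bar>g (Suc k) x - g k x\<bar>)" for x
  have Sm: "S \<in> borel_measurable M" unfolding S_def by measurable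
  have "(\<integral>\<^sup>+x. S x \<partial>M) = (\<Sum>k. (\<integral>\<^sup>+x. ennreal \<bar>g (Suc k) x - g k x\<bar> \<partial>M))"
    unfolding S_def by (rule nn_integral_suminf) measurable
  also have "\<dots> = (\<Sum>k. ennreal (D (r (Suc k)) (r k)))" by (simp add: g_def ennD)
  finally have "(\<integral>\<^sup>+x. S x \<partial>M) \<noteq> \<infinity>" using ennreal_suminf_neq_top[OF sumD Dnn] by simp
  then have AEfin: "AE x in M. S x \<noteq> \<infinity>" by (rule nn_integral_noteq_infinite[OF Sm])
  have AEconv: "AE x in M. convergent (\<lambda>k. g k x)"
    using AEfin
  proof (rule eventually_mono)
    fix x assume "S x \<noteq> \<infinity>"
    then have "summable (\<lambda>k. \<bar>g (Suc k) x - g k x\<bar>)"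
      unfolding S_def by (intro summable_suminf_not_top) auto
    then have "summable (\<lambda>k. g (Suc k) x - g k x)" by (rule summable_rabs_cancel)
    then have "(\<lambda>n. \<Sum>k<n. g (Suc k) x - g k x) \<longlonglongrightarrow> (\<Sum>k. g (Suc k) x - g k x)"
      by (rule summable_LIMSEQ)
    then have "(\<lambda>n. g n x - g 0 x) \<longlonglongrightarrow> (\<Sum>k. g (Suc k) x - g k x)"
      using sum_lessThan_telescope[of "\<lambda>k. g k x"] by simp
    then have "(\<lambda>n. (g n x - g 0 x) + g 0 x) \<longlonglongrightarrow> (\<Sum>k. g (Suc k) x - g k x) + g 0 x"
      by (intro tendsto_add tendsto_const)
    then show "convergent (\<lambda>k. g k x)" by (auto simp: convergent_def)
  qed
  define h where "h x = lim (\<lambda>k. g k x)" for x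
  have hm[measurable]: "h \<in> borel_measurable M" unfolding h_def by measurable
  have AElim: "AE x in M. (\<lambda>k. g k x) \<longlonglongrightarrow> h x"
    using AEconv by (rule eventually_mono) (simp add: h_def convergent_LIMSEQ_iff)
  have bound: "\<exists>N. \<forall>m\<ge>N. (\<integral>\<^sup>+x. ennreal \<bar>f m x - h x\<bar> \<partial>M) \<le> ennreal e" if e: "0 < e" for e
  proof -
    obtain N where N: "\<And>a b. a \<ge> N \<Longrightarrow> b \<ge> N \<Longrightarrow> D a b \<le> e"
      using C e unfolding L1Cauchy_def D_def by blast
    have "(\<integral>\<^sup>+x. ennreal \<bar>f m x - h x\<bar> \<partial>M) \<le> ennreal e" if m: "m \<ge> N" for m
    proof -
      have "(\<integral>\<^sup>+x. ennreal \<bar>f m x - h x\<bar> \<partial>M) = (\<integral>\<^sup>+x. liminf (\<lambda>k. ennreal \<bar>f m x - g k x\<bar>) \<partial>M)"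
      proof (rule nn_integral_cong_AE)
        show "AE x in M. ennreal \<bar>f m x - h x\<bar> = liminf (\<lambda>k. ennreal \<bar>f m x - g k x\<bar>)"
          using AElim
        proof (rule eventually_mono)
          fix x assume "(\<lambda>k. g k x) \<longlonglongrightarrow> h x"
          then have "(\<lambda>k. ennreal \<bar>f m x - g k x\<bar>) \<longlonglongrightarrow> ennreal \<bar>f m x - h x\<bar>"
            by (intro tendsto_ennrealI tendsto_rabs tendsto_diff tendsto_const)
          then show "ennreal \<bar>f m x - h x\<bar> = liminf (\<lambda>k. ennreal \<bar>f m x - g k x\<bar>)"
            by (intro lim_imp_Liminf[symmetric]) auto
        qed
      qed
      also have "\<dots> \<le> liminf (\<lambda>k. (\<integral>\<^sup>+x. ennreal \<bar>f m x - g k x\<bar> \<partial>M))"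
        by (rule nn_integral_liminf) measurable
      also have "\<dots> = liminf (\<lambda>k. ennreal (D m (r k)))" by (simp add: g_def ennD)
      also have "\<dots> \<le> liminf (\<lambda>k. ennreal e)"
      proof (rule Liminf_mono)
        show "\<forall>\<^sub>F k in sequentially. ennreal (D m (r k)) \<le> ennreal e"
          unfolding eventually_sequentially
        proof (intro exI allI impI)
          fix k assume "N \<le> k"
          then have "N \<le> r k" using rge[of k] by simp
          then show "ennreal (D m (r k)) \<le> ennreal e" using N[OF m] by (simp add: ennreal_leI)
        qed
      qed
      also have "\<dots> = ennreal e" by (simp add: Liminf_const)
      finally show ?thesis .
    qed
    then show ?thesis by blast
  qed
  obtain N1 where N1: "\<And>m. m \<ge> N1 \<Longrightarrow> (\<integral>\<^sup>+x. ennreal \<bar>f m x - h x\<bar> \<partial>M) \<le> ennreal 1"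
    using bound[of 1] by auto
  have hi: "integrable M h"
  proof (rule integrableI_bounded)
    show "h \<in> borel_measurable M" by (rule hm)
    have "(\<integral>\<^sup>+x. ennreal (norm (h x)) \<partial>M) \<le> (\<integral>\<^sup>+x. ennreal \<bar>f N1 x\<bar> + ennreal \<bar>f N1 x - h x\<bar> \<partial>M)"
    proof (rule nn_integral_mono)
      fix x
      have "norm (h x) \<le> \<bar>f N1 x\<bar> + \<bar>f N1 x - h x\<bar>" by simp
      then have "ennreal (norm (h x)) \<le> ennreal (\<bar>f N1 x\<bar> + \<bar>f N1 x - h x\<bar>)" by (rule ennreal_leI)
      then show "ennreal (norm (h x)) \<le> ennreal \<bar>f N1 x\<bar> + ennreal \<bar>f N1 x - h x\<bar>"
        by (simp add: ennreal_plus)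
    qed
    also have "\<dots> = (\<integral>\<^sup>+x. ennreal \<bar>f N1 x\<bar> \<partial>M) + (\<integral>\<^sup>+x. ennreal \<bar>f N1 x - h x\<bar> \<partial>M)"
      by (rule nn_integral_add) measurable
    also have "(\<integral>\<^sup>+x. ennreal \<bar>f N1 x\<bar> \<partial>M) = ennreal (\<integral>x. \<bar>f N1 x\<bar> \<partial>M)"
      by (rule nn_integral_eq_integral) (use fi in auto)
    also have "\<dots> + (\<integral>\<^sup>+x. ennreal \<bar>f N1 x - h x\<bar> \<partial>M) < \<infinity>"
    proof -
      have "(\<integral>\<^sup>+x. ennreal \<bar>f N1 x - h x\<bar> \<partial>M) < \<infinity>"
        using N1[of N1] by (simp add: order_le_less_trans[of _ 1])
      then show ?thesis by (simp add: ennreal_add_eq_top less_top)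
    qed
    finally show "(\<integral>\<^sup>+x. norm (h x) \<partial>M) < \<infinity>" .
  qed
  have "L1_conv M f h"
    unfolding L1_conv_def
  proof (rule LIMSEQ_I)
    fix e :: real assume e: "0 < e"
    then have "0 < e / 2" by simp
    from bound[OF this] obtain N where N: "\<And>m. m \<ge> N \<Longrightarrow> (\<integral>\<^sup>+x. ennreal \<bar>f m x - h x\<bar> \<partial>M) \<le> ennreal (e / 2)"
      by auto
    have "norm ((\<integral>x. \<bar>f n x - h x\<bar> \<partial>M) - 0) < e" if n: "n \<ge> N" for n
    proof -
      have ih: "integrable M (\<lambda>x. \<bar>f n x - h x\<bar>)"
        by (intro integrable_abs Bochner_Integration.integrable_diff fi hi)
      have "ennreal (\<integral>x. \<bar>f n x - h x\<bar> \<partial>M) = (\<integral>\<^sup>+x. ennreal \<bar>f n x - h x\<bar> \<partial>M)"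
        by (rule nn_integral_eq_integral[OF ih, symmetric]) simp
      also have "\<dots> \<le> ennreal (e / 2)" by (rule N[OF n])
      finally have "(\<integral>x. \<bar>f n x - h x\<bar> \<partial>M) \<le> e / 2" using e by (simp add: ennreal_le_iff)
      moreover have "0 \<le> (\<integral>x. \<bar>f n x - h x\<bar> \<partial>M)" by (intro integral_nonneg_AE) auto
      ultimately show ?thesis using e by simp
    qed
    then show "\<exists>no. \<forall>n\<ge>no. norm ((\<integral>x. \<bar>f n x - h x\<bar> \<partial>M) - 0) < e" by blast
  qed
  then show ?thesis using hi by blast
qed



lemma cauchy_subseq:
  fixes f :: "nat \<Rightarrow> 'a \<Rightarrow> real"
  assumes M: "prob_space M" and Qne: "Qs \<noteq> {}"
    and Qs: "\<And>Q. Q \<in> Qs \<Longrightarrow> prob_on M Q \<and> absolutely_continuous M Q"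
    and tv: "tv_relcompact M Qs"
    and f: "\<And>n. f n \<in> dens_set M (Qhat M Qs)"
  shows "\<exists>d::nat\<Rightarrow>nat. strict_mono d \<and> L1Cauchy M (f \<circ> d)"
proof -
  define P where "P k s \<longleftrightarrow> (\<exists>N. \<forall>a\<ge>N. \<forall>b\<ge>N. (\<integral>x. \<bar>f (s a) x - f (s b) x\<bar> \<partial>M) \<le> 1 / real (Suc k))"
    for k :: nat and s :: "nat \<Rightarrow> nat"
  have ex: "\<exists>r'. strict_mono r' \<and> P k (s \<circ> r')" if s: "strict_mono s" for k :: nat and s :: "nat \<Rightarrow> nat"
  proof -
    have e: "0 < 1 / (3 * real (Suc k))" by simp
    have "\<exists>r::nat\<Rightarrow>nat. strict_mono r \<and> (\<exists>N. \<forall>a\<ge>N. \<forall>b\<ge>N. (\<integral>x. \<bar>(f \<circ> s) (r a) x - (f \<circ> s) (r b) x\<bar> \<partial>M) \<le> 3 * (1 / (3 * real (Suc k))))"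
      by (rule level_extract[OF M Qne Qs tv e]) (auto simp: f)
    then obtain r :: "nat \<Rightarrow> nat" where r: "strict_mono r"
      and N: "\<exists>N. \<forall>a\<ge>N. \<forall>b\<ge>N. (\<integral>x. \<bar>(f \<circ> s) (r a) x - (f \<circ> s) (r b) x\<bar> \<partial>M) \<le> 3 * (1 / (3 * real (Suc k)))"
      by blast
    have eq: "3 * (1 / (3 * real (Suc k))) = 1 / real (Suc k)" by (simp add: field_simps)
    have "P k (s \<circ> r)" using N unfolding P_def comp_def eq .
    then show ?thesis using r by blast
  qed
  interpret S: subseqs P by unfold_locales (rule ex)
  have stab: "P n (s \<circ> r)" if "strict_mono r" "P n s" for r s n
  proof -
    from that(2) obtain N where N: "\<And>a b. a \<ge> N \<Longrightarrow> b \<ge> N \<Longrightarrow> (\<integral>x. \<bar>f (s a) x - f (s b) x\<bar> \<partial>M) \<le> 1 / real (Suc n)"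
      unfolding P_def by blast
    have "(\<integral>x. \<bar>f (s (r a)) x - f (s (r b)) x\<bar> \<partial>M) \<le> 1 / real (Suc n)" if "a \<ge> N" "b \<ge> N" for a b
      by (rule N) (use seq_suble[OF \<open>strict_mono r\<close>, of a] seq_suble[OF \<open>strict_mono r\<close>, of b] that in auto)
    then show ?thesis unfolding P_def by auto
  qed
  have hold: "P k (S.diagseq \<circ> (+) (Suc k))" for k by (rule S.diagseq_holds[OF stab])
  have "L1Cauchy M (f \<circ> S.diagseq)"
    unfolding L1Cauchy_def
  proof (intro allI impI)
    fix e :: real assume e: "0 < e"
    obtain n :: nat where n: "0 < n" "inverse (real n) < e" using ex_inverse_of_nat_less[OF e] by auto
    define k where "k = n - 1"
    have "Suc k = n" using n(1) by (simp add: k_def)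
    then have k: "inverse (real (Suc k)) < e" using n(2) by simp
    from hold[of k] obtain N where N: "\<And>a b. a \<ge> N \<Longrightarrow> b \<ge> N \<Longrightarrow>
      (\<integral>x. \<bar>f (S.diagseq (Suc k + a)) x - f (S.diagseq (Suc k + b)) x\<bar> \<partial>M) \<le> 1 / real (Suc k)"
      unfolding P_def by auto
    have "(\<integral>x. \<bar>(f \<circ> S.diagseq) a x - (f \<circ> S.diagseq) b x\<bar> \<partial>M) \<le> e" if "a \<ge> N + Suc k" "b \<ge> N + Suc k" for a b
    proof -
      have "(\<integral>x. \<bar>f (S.diagseq (Suc k + (a - Suc k))) x - f (S.diagseq (Suc k + (b - Suc k))) x\<bar> \<partial>M) \<le> 1 / real (Suc k)"
        by (rule N) (use that in auto)
      moreover have "Suc k + (a - Suc k) = a" "Suc k + (b - Suc k) = b" using that by auto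
      ultimately show ?thesis using k by (simp add: inverse_eq_divide)
    qed
    then show "\<exists>N. \<forall>a\<ge>N. \<forall>b\<ge>N. (\<integral>x. \<bar>(f \<circ> S.diagseq) a x - (f \<circ> S.diagseq) b x\<bar> \<partial>M) \<le> e" by blast
  qed
  then show ?thesis using S.subseq_diagseq by blast
qed

theorem lemma6p9:
  fixes M :: "'a measure" and Qs :: "'a measure set"
  assumes "prob_space M"
    and "Qs \<noteq> {}"
    and "\<And>Q. Q \<in> Qs \<Longrightarrow> prob_on M Q \<and> absolutely_continuous M Q"
  shows "L1_closed M (dens_set M (Qhat M Qs)) \<and>
    (tv_relcompact M Qs \<longrightarrow>
       L1_compact M (dens_set M (Qhat M Qs)) \<and> L1_relcompact M (dens_set M (Qhat_e M Qs)))"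
proof (intro conjI impI)
  note M = assms(1) and Qne = assms(2) and Qs = assms(3)
  show cl: "L1_closed M (dens_set M (Qhat M Qs))" by (rule closed_part[OF M])
  assume tv: "tv_relcompact M Qs"
  have Qp: "\<And>Q. Q \<in> Qhat M Qs \<Longrightarrow> prob_on M Q" by (auto simp: Qhat_def)
  show comp: "L1_compact M (dens_set M (Qhat M Qs))"
    unfolding L1_compact_def
  proof (intro allI impI)
    fix f :: "nat \<Rightarrow> 'a \<Rightarrow> real" assume f: "\<forall>n. f n \<in> dens_set M (Qhat M Qs)"
    obtain d :: "nat \<Rightarrow> nat" where d: "strict_mono d" and C: "L1Cauchy M (f \<circ> d)"
      using cauchy_subseq[OF M Qne Qs tv] f by blast
    have fi: "integrable M ((f \<circ> d) n)" for n using dens_basic(1)[OF M f[rule_format, of "d n"] Qp] by simp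
    obtain g where gi: "integrable M g" and conv: "L1_conv M (f \<circ> d) g"
      using L1_complete[OF fi C] by blast
    obtain h where hF: "h \<in> dens_set M (Qhat M Qs)" and gh: "AE x in M. g x = h x"
      using cl[unfolded L1_closed_def, rule_format, of "f \<circ> d" g] f gi conv by auto
    have hi: "integrable M h" using dens_basic(1)[OF M hF Qp] .
    have eqi: "(\<integral>x. \<bar>(f \<circ> d) n x - g x\<bar> \<partial>M) = (\<integral>x. \<bar>(f \<circ> d) n x - h x\<bar> \<partial>M)" for n
    proof (rule integral_cong_AE)
      show "(\<lambda>x. \<bar>(f \<circ> d) n x - g x\<bar>) \<in> borel_measurable M"
        using fi[of n] gi by (intro borel_measurable_abs borel_measurable_diff borel_measurable_integrable)
      show "(\<lambda>x. \<bar>(f \<circ> d) n x - h x\<bar>) \<in> borel_measurable M"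
        using fi[of n] hi by (intro borel_measurable_abs borel_measurable_diff borel_measurable_integrable)
      have "AE x in M. g x = h x" by (rule gh)
      then show "AE x in M. \<bar>(f \<circ> d) n x - g x\<bar> = \<bar>(f \<circ> d) n x - h x\<bar>" by eventually_elim simp
    qed
    have "L1_conv M (f \<circ> d) h" using conv unfolding L1_conv_def eqi .
    then show "\<exists>r h. strict_mono r \<and> h \<in> dens_set M (Qhat M Qs) \<and> L1_conv M (f \<circ> r) h"
      using d hF by blast
  qed
  show "L1_relcompact M (dens_set M (Qhat_e M Qs))"
    unfolding L1_relcompact_def
  proof (intro allI impI)
    fix f :: "nat \<Rightarrow> 'a \<Rightarrow> real" assume f: "\<forall>n. f n \<in> dens_set M (Qhat_e M Qs)"
    have "dens_set M (Qhat_e M Qs) \<subseteq> dens_set M (Qhat M Qs)"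
      by (auto simp: dens_set_def Qhat_e_def)
    then have "\<forall>n. f n \<in> dens_set M (Qhat M Qs)" using f by blast
    then obtain r h where r: "strict_mono r" and hF: "h \<in> dens_set M (Qhat M Qs)" and c: "L1_conv M (f \<circ> r) h"
      using comp unfolding L1_compact_def by blast
    have hi: "integrable M h" using dens_basic(1)[OF M hF Qp] .
    show "\<exists>r h. strict_mono r \<and> integrable M h \<and> L1_conv M (f \<circ> r) h" using r hi c by blast
  qed
qed


end
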